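(* Let $V$ be a real-valued, locally integrable potential on $[0,\infty)$ or on $\mathbb{R}$, and let $H=-D^2+V$ be the associated Schrödinger operator on $L^2(0,\infty)$ or on $L^2(\mathbb{R})$, respectively. Suppose that \[ \limsup_{x\to \infty}|xV(x)|=a<\infty . \] Then $H$ admits no eigenvalue larger than $\frac{4a^2}{\pi^2}$.
   Context: $D$ denotes differentiation $d/dx$. $H$ is a self-adjoint realization of $-\frac{d^2}{dx^2}+V$ (on the half-line, with a self-adjoint boundary condition at $0$). A number $\lambda$ is an eigenvalue of $H$ if there is a nonzero $u\in L^2$ in the domain of $H$ (in particular satisfying the boundary condition, in the half-line case) solving $-u''+Vu=\lambda u$. *)

theory Defs
  imports "HOL-Analysis.Analysis"
begin

definition locally_integrable_pot :: "real set \<Rightarrow> (real \<Rightarrow> real) \<Rightarrow> bool" where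
  "locally_integrable_pot I V \<longleftrightarrow>
     (\<forall>s t. {s..t} \<subseteq> I \<longrightarrow> set_integrable lborel {s..t} V)"

text \<open>u (with derivative u') solves -u'' + V u = lam u on the interval I in the
  Caratheodory sense: u is differentiable with derivative u', and u' is the
  indefinite integral of (V - lam) u, i.e. u' is absolutely continuous with
  u'' = (V - lam) u almost everywhere.\<close>
definition sl_solution ::
  "(real \<Rightarrow> real) \<Rightarrow> real \<Rightarrow> real set \<Rightarrow> (real \<Rightarrow> complex) \<Rightarrow> (real \<Rightarrow> complex) \<Rightarrow> bool" where
  "sl_solution V lam I u u' \<longleftrightarrow>
     (\<forall>x\<in>I. (u has_vector_derivative u' x) (at x within I)) \<and>
     (\<forall>x\<in>I. \<forall>y\<in>I. y \<le> x \<longrightarrow>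
        ((\<lambda>t. complex_of_real (V t - lam) * u t) has_integral (u' x - u' y)) {y..x})"

definition square_integrable_on :: "real set \<Rightarrow> (real \<Rightarrow> complex) \<Rightarrow> bool" where
  "square_integrable_on I u \<longleftrightarrow> set_integrable lborel I (\<lambda>x. (cmod (u x))\<^sup>2)"

text \<open>Eigenvalue of the self-adjoint realization of -D^2 + V on L^2(0,oo) with the
  boundary condition cos(alpha) u(0) + sin(alpha) u'(0) = 0 at the regular endpoint 0.\<close>
definition halfline_eigenvalue :: "(real \<Rightarrow> real) \<Rightarrow> real \<Rightarrow> real \<Rightarrow> bool" where
  "halfline_eigenvalue V \<alpha> lam \<longleftrightarrow>
     (\<exists>u u'. sl_solution V lam {0..} u u' \<and> square_integrable_on {0..} u \<and>
        (\<exists>x\<ge>0. u x \<noteq> 0) \<and>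
        complex_of_real (cos \<alpha>) * u 0 + complex_of_real (sin \<alpha>) * u' 0 = 0)"

definition line_eigenvalue :: "(real \<Rightarrow> real) \<Rightarrow> real \<Rightarrow> bool" where
  "line_eigenvalue V lam \<longleftrightarrow>
     (\<exists>u u'. sl_solution V lam UNIV u u' \<and> square_integrable_on UNIV u \<and>
        (\<exists>x. u x \<noteq> 0))"

end

theory Submission
  imports Defs
begin
lemma small_mult_le_zero:
  fixes x K :: real
  assumes "\<And>e. e > 0 \<Longrightarrow> x \<le> e * K"
  shows "x \<le> 0"
proof (rule ccontr)
  assume "\<not> x \<le> 0"
  hence x: "x > 0" by simp
  show False
  proof (cases "K \<le> 0")
    case True
    then show False using assms[of 1] x by simp
  next
    case False
    have "x \<le> (x / (2*K)) * K" using assms[of "x/(2*K)"] x False by simp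
    also have "\<dots> = x/2" using False by (simp add: field_simps)
    finally show False using x by simp
  qed
qed

lemma zero_var:
  fixes F :: "real \<Rightarrow> 'a::real_normed_vector" and G :: "real \<Rightarrow> real"
  assumes ab: "a \<le> b"
  and H: "\<And>e. e > 0 \<Longrightarrow> \<exists>d>0. \<forall>x y. a \<le> x \<longrightarrow> x \<le> y \<longrightarrow> y \<le> b \<longrightarrow> y - x < d
           \<longrightarrow> norm (F y - F x) \<le> e * (G y - G x)"
  shows "F b = F a"
proof -
  have "norm (F b - F a) \<le> e * (G b - G a)" if e: "e > 0" for e
  proof -
    obtain d where d: "d>0" and dH: "\<forall>x y. a \<le> x \<longrightarrow> x \<le> y \<longrightarrow> y \<le> b \<longrightarrow> y - x < d
           \<longrightarrow> norm (F y - F x) \<le> e * (G y - G x)" using H[OF e] by blast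
    obtain n::nat where n: "(b - a) / d < n" using reals_Archimedean2 by blast
    have "(b - a)/d \<ge> 0" using ab d by simp
    hence npos: "n > 0" using n by linarith
    define s where "s i = a + real i * (b - a) / n" for i
    have s0: "s 0 = a" and sn: "s n = b" using npos by (auto simp: s_def)
    have step: "(b - a) / n < d" using n d npos by (simp add: field_simps)
    have tel: "F b - F a = (\<Sum>i<n. F (s (Suc i)) - F (s i))"
      by (subst sum_lessThan_telescope) (simp add: s0 sn)
    have telG: "G b - G a = (\<Sum>i<n. G (s (Suc i)) - G (s i))"
      by (subst sum_lessThan_telescope) (simp add: s0 sn)
    have each: "norm (F (s (Suc i)) - F (s i)) \<le> e * (G (s (Suc i)) - G (s i))" if i: "i < n" for i
    proof -
      have "a \<le> s i" using ab npos by (simp add: s_def)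
      moreover have "s i \<le> s (Suc i)" using ab npos by (simp add: s_def field_simps)
      moreover have "s (Suc i) \<le> b"
      proof -
        have "real (Suc i) \<le> real n" using i by simp
        hence "real (Suc i) * (b - a) \<le> real n * (b - a)" using ab by (intro mult_right_mono) auto
        thus ?thesis using npos by (simp add: s_def field_simps)
      qed
      moreover have "s (Suc i) - s i = (b - a) / n"
        by (simp add: s_def diff_divide_distrib[symmetric] algebra_simps)
      hence "s (Suc i) - s i < d" using step by simp
      ultimately show ?thesis using dH by blast
    qed
    have "norm (F b - F a) \<le> (\<Sum>i<n. norm (F (s (Suc i)) - F (s i)))"
      unfolding tel by (rule norm_sum)
    also have "\<dots> \<le> (\<Sum>i<n. e * (G (s (Suc i)) - G (s i)))"
      by (rule sum_mono) (use each in auto)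
    also have "\<dots> = e * (G b - G a)" by (simp add: telG sum_distrib_left)
    finally show ?thesis .
  qed
  hence "norm (F b - F a) \<le> 0" by (rule small_mult_le_zero)
  thus ?thesis by simp
qed

lemma prod_rule:
  fixes P Q g h :: "real \<Rightarrow> complex"
  assumes ab: "a \<le> b"
  and Pc: "continuous_on {a..b} P" and Qc: "continuous_on {a..b} Q"
  and gi: "g absolutely_integrable_on {a..b}" and hi: "h absolutely_integrable_on {a..b}"
  and Pg: "\<And>s t. a \<le> s \<Longrightarrow> s \<le> t \<Longrightarrow> t \<le> b \<Longrightarrow> (g has_integral (P t - P s)) {s..t}"
  and Qh: "\<And>s t. a \<le> s \<Longrightarrow> s \<le> t \<Longrightarrow> t \<le> b \<Longrightarrow> (h has_integral (Q t - Q s)) {s..t}"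
  shows "((\<lambda>t. g t * Q t + P t * h t) has_integral (P b * Q b - P a * Q a)) {a..b}"
proof -
  define f where "f t = g t * Q t + P t * h t" for t
  have bQ: "bounded (Q ` {a..b})" by (intro compact_imp_bounded compact_continuous_image Qc) auto
  have bP: "bounded (P ` {a..b})" by (intro compact_imp_bounded compact_continuous_image Pc) auto
  have mQ: "Q \<in> borel_measurable (lebesgue_on {a..b})"
    by (rule continuous_imp_measurable_on_sets_lebesgue[OF Qc]) auto
  have mP: "P \<in> borel_measurable (lebesgue_on {a..b})"
    by (rule continuous_imp_measurable_on_sets_lebesgue[OF Pc]) auto
  have "(\<lambda>t. Q t * g t) absolutely_integrable_on {a..b}"
    by (rule absolutely_integrable_bounded_measurable_product[OF bilinear_times mQ _ bQ gi]) auto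
  hence gQ: "(\<lambda>t. g t * Q t) absolutely_integrable_on {a..b}" by (simp add: mult.commute)
  have hP: "(\<lambda>t. P t * h t) absolutely_integrable_on {a..b}"
    by (rule absolutely_integrable_bounded_measurable_product[OF bilinear_times mP _ bP hi]) auto
  have fi: "f integrable_on {a..b}"
    unfolding f_def using gQ hP by (intro integrable_add) (auto simp: absolutely_integrable_on_def)
  have ngi: "(\<lambda>t. norm (g t) + norm (h t)) integrable_on {a..b}"
    using gi hi by (intro integrable_add) (auto simp: absolutely_integrable_on_def)
  define I where "I x = integral {a..x} f" for x
  define G where "G x = integral {a..x} (\<lambda>t. norm (g t) + norm (h t))" for x
  define D where "D x = P x * Q x - P a * Q a - I x" for x
  have "D b = D a"
  proof (rule zero_var[OF ab, where G = G])
    fix e :: real assume e: "e > 0"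
    have "uniformly_continuous_on {a..b} P" by (intro compact_uniformly_continuous Pc) auto
    then obtain d1 where d1: "d1 > 0" and d1H: "\<And>x x'. x \<in> {a..b} \<Longrightarrow> x' \<in> {a..b} \<Longrightarrow> dist x' x < d1 \<Longrightarrow> dist (P x') (P x) < e"
      unfolding uniformly_continuous_on_def using e by metis
    have "uniformly_continuous_on {a..b} Q" by (intro compact_uniformly_continuous Qc) auto
    then obtain d2 where d2: "d2 > 0" and d2H: "\<And>x x'. x \<in> {a..b} \<Longrightarrow> x' \<in> {a..b} \<Longrightarrow> dist x' x < d2 \<Longrightarrow> dist (Q x') (Q x) < e"
      unfolding uniformly_continuous_on_def using e by metis
    show "\<exists>d>0. \<forall>x y. a \<le> x \<longrightarrow> x \<le> y \<longrightarrow> y \<le> b \<longrightarrow> y - x < d \<longrightarrow> norm (D y - D x) \<le> e * (G y - G x)"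
    proof (intro exI[of _ "min d1 d2"] conjI allI impI)
      show "min d1 d2 > 0" using d1 d2 by simp
      fix x y assume xy: "a \<le> x" "x \<le> y" "y \<le> b" "y - x < min d1 d2"
      have sub: "{x..y} \<subseteq> {a..b}" using xy by auto
      have fxy: "(f has_integral (I y - I x)) {x..y}"
      proof -
        have "integral {a..x} f + integral {x..y} f = integral {a..y} f"
          using xy fi by (intro Henstock_Kurzweil_Integration.integral_combine) (auto intro: integrable_subinterval_real)
        moreover have "f integrable_on {x..y}" using fi sub integrable_subinterval_real by blast
        ultimately show ?thesis unfolding I_def by (metis add_diff_cancel_left' integrable_integral)
      qed
      have h1: "((\<lambda>t. g t * Q y) has_integral ((P y - P x) * Q y)) {x..y}"
        using Pg[of x y] xy by (intro has_integral_mult_left) auto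
      have h2: "((\<lambda>t. P x * h t) has_integral (P x * (Q y - Q x))) {x..y}"
        using Qh[of x y] xy by (intro has_integral_mult_right) auto
      have h3: "((\<lambda>t. g t * Q y + P x * h t - f t) has_integral
                 ((P y - P x) * Q y + P x * (Q y - Q x) - (I y - I x))) {x..y}"
        by (intro has_integral_diff has_integral_add h1 h2 fxy)
      have eqD: "(P y - P x) * Q y + P x * (Q y - Q x) - (I y - I x) = D y - D x"
        unfolding D_def by (simp add: algebra_simps)
      have eqf: "(\<lambda>t. g t * Q y + P x * h t - f t) = (\<lambda>t. g t * (Q y - Q t) + (P x - P t) * h t)"
        unfolding f_def by (auto simp: algebra_simps)
      have h4: "((\<lambda>t. g t * (Q y - Q t) + (P x - P t) * h t) has_integral (D y - D x)) {x..y}"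
        using h3 unfolding eqD eqf .
      have nint: "(\<lambda>t. norm (g t) + norm (h t)) integrable_on {x..y}"
        using ngi sub integrable_subinterval_real by blast
      have Gxy: "G y - G x = integral {x..y} (\<lambda>t. norm (g t) + norm (h t))"
      proof -
        have "integral {a..x} (\<lambda>t. norm (g t) + norm (h t)) + integral {x..y} (\<lambda>t. norm (g t) + norm (h t))
              = integral {a..y} (\<lambda>t. norm (g t) + norm (h t))"
          using xy ngi by (intro Henstock_Kurzweil_Integration.integral_combine) (auto intro: integrable_subinterval_real)
        thus ?thesis unfolding G_def by simp
      qed
      have pw: "norm (g t * (Q y - Q t) + (P x - P t) * h t) \<le> e * (norm (g t) + norm (h t))"
        if t: "t \<in> {x..y}" for t
      proof -
        have ta: "t \<in> {a..b}" using t sub by auto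
        have "dist (Q y) (Q t) < e" using d2H[of t y] t xy ta by (auto simp: dist_real_def)
        hence q: "norm (Q y - Q t) \<le> e" by (simp add: dist_norm)
        have "dist (P t) (P x) < e" using d1H[of x t] t xy ta by (auto simp: dist_real_def)
        hence p: "norm (P x - P t) \<le> e" by (simp add: dist_norm norm_minus_commute)
        have "norm (g t * (Q y - Q t) + (P x - P t) * h t) \<le> norm (g t) * norm (Q y - Q t) + norm (P x - P t) * norm (h t)"
          by (metis norm_mult norm_triangle_ineq)
        also have "\<dots> \<le> norm (g t) * e + e * norm (h t)"
          by (intro add_mono mult_left_mono mult_right_mono p q) auto
        finally show ?thesis by (simp add: algebra_simps)
      qed
      have "norm (D y - D x) = norm (integral {x..y} (\<lambda>t. g t * (Q y - Q t) + (P x - P t) * h t))"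
        using h4 by (simp add: integral_unique)
      also have "\<dots> \<le> integral {x..y} (\<lambda>t. e * (norm (g t) + norm (h t)))"
        using h4 pw integrable_cmul[OF nint, of e] by (intro integral_norm_bound_integral) auto
      also have "\<dots> = e * (G y - G x)" unfolding Gxy by simp
      finally show "norm (D y - D x) \<le> e * (G y - G x)" .
    qed
  qed
  hence "I b = P b * Q b - P a * Q a" unfolding D_def I_def by simp
  thus ?thesis using fi unfolding I_def f_def by (metis integrable_integral)
qed

lemma deriv_aux1: "k > 0 \<Longrightarrow> ((\<lambda>t. -cos(2*k*t+\<phi>)/(2*k)) has_real_derivative sin(2*k*t+\<phi>)) (at t within S)" for k::real
  by (rule derivative_eq_intros refl | simp)+
lemma deriv_aux2: "k > 0 \<Longrightarrow> ((\<lambda>t. cos(2*k*t+\<phi>)/(2*k)) has_real_derivative - sin(2*k*t+\<phi>)) (at t within S)" for k::real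
  by (rule derivative_eq_intros refl | simp)+

lemma int_abs_sin_base:
  fixes k \<phi> :: real
  assumes k: "k > 0"
  defines "x0 \<equiv> -\<phi>/(2*k)"
  shows "((\<lambda>t. \<bar>sin (2*k*t + \<phi>)\<bar>) has_integral 2/k) {x0..x0 + pi/k}"
proof -
  define m where "m = x0 + pi/(2*k)"
  have e0: "2*k*x0 + \<phi> = 0" using k by (simp add: x0_def field_simps)
  have em: "2*k*m + \<phi> = pi" using k by (simp add: x0_def m_def field_simps)
  have eL: "2*k*(x0 + pi/k) + \<phi> = 2*pi" using k by (simp add: x0_def field_simps)
  have xm: "x0 \<le> m" using k by (simp add: m_def)
  have mL: "m \<le> x0 + pi/k" using k by (simp add: m_def field_simps)
  have D1: "((\<lambda>t. -cos(2*k*t+\<phi>)/(2*k)) has_real_derivative sin(2*k*t+\<phi>)) (at t within S)" for t S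
    using k by (rule deriv_aux1)
  have D2: "((\<lambda>t. cos(2*k*t+\<phi>)/(2*k)) has_real_derivative - sin(2*k*t+\<phi>)) (at t within S)" for t S
    using k by (rule deriv_aux2)
  have I1: "((\<lambda>t. sin (2*k*t + \<phi>)) has_integral (-cos (2*k*m+\<phi>)/(2*k) - (-cos (2*k*x0+\<phi>)/(2*k)))) {x0..m}"
    by (rule fundamental_theorem_of_calculus[OF xm])
       (use D1 in \<open>simp add: has_real_derivative_iff_has_vector_derivative[symmetric]\<close>)
  have I2: "((\<lambda>t. - sin (2*k*t + \<phi>)) has_integral (cos (2*k*(x0+pi/k)+\<phi>)/(2*k) - cos (2*k*m+\<phi>)/(2*k))) {m..x0+pi/k}"
    by (rule fundamental_theorem_of_calculus[OF mL])
       (use D2 in \<open>simp add: has_real_derivative_iff_has_vector_derivative[symmetric]\<close>)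
  have c1: "-cos (2*k*m+\<phi>)/(2*k) - (-cos (2*k*x0+\<phi>)/(2*k)) = 1/k"
    unfolding e0 em using k by simp
  have c2: "cos (2*k*(x0+pi/k)+\<phi>)/(2*k) - cos (2*k*m+\<phi>)/(2*k) = 1/k"
    unfolding eL em using k by simp
  have eq1: "\<bar>sin (2*k*t + \<phi>)\<bar> = sin (2*k*t + \<phi>)" if "t \<in> {x0..m}" for t
  proof -
    have "2*k*x0 \<le> 2*k*t" "2*k*t \<le> 2*k*m" using that k by auto
    hence "0 \<le> 2*k*t + \<phi>" "2*k*t + \<phi> \<le> pi" using e0 em by linarith+
    thus ?thesis by (simp add: sin_ge_zero)
  qed
  have eq2: "\<bar>sin (2*k*t + \<phi>)\<bar> = - sin (2*k*t + \<phi>)" if "t \<in> {m..x0+pi/k}" for t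
  proof -
    have "2*k*m \<le> 2*k*t" "2*k*t \<le> 2*k*(x0+pi/k)" using that k by auto
    hence "pi \<le> 2*k*t + \<phi>" "2*k*t + \<phi> \<le> 2*pi" using eL em by linarith+
    hence "0 \<le> 2*k*t + \<phi> - pi" "2*k*t + \<phi> - pi \<le> pi" by auto
    hence "sin (2*k*t + \<phi> - pi) \<ge> 0" by (rule sin_ge_zero)
    hence "sin (2*k*t + \<phi>) \<le> 0" by (simp add: sin_diff)
    thus ?thesis by simp
  qed
  have I1': "((\<lambda>t. \<bar>sin (2*k*t + \<phi>)\<bar>) has_integral 1/k) {x0..m}"
    by (subst has_integral_cong[OF eq1]) (use I1 c1 in auto)
  have I2': "((\<lambda>t. \<bar>sin (2*k*t + \<phi>)\<bar>) has_integral 1/k) {m..x0+pi/k}"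
    by (subst has_integral_cong[OF eq2]) (use I2 c2 in auto)
  have "((\<lambda>t. \<bar>sin (2*k*t + \<phi>)\<bar>) has_integral (1/k + 1/k)) {x0..x0+pi/k}"
    by (rule has_integral_combine[OF xm mL I1' I2'])
  thus ?thesis by simp
qed
lemma int_abs_sin:
  fixes k \<phi> x :: real
  assumes k: "k > 0"
  shows "((\<lambda>t. \<bar>sin (2*k*t + \<phi>)\<bar>) has_integral 2/k) {x..x + pi/k}"
proof -
  define f where "f t = \<bar>sin (2*k*t + \<phi>)\<bar>" for t
  define L where "L = pi/k"
  define x0 where "x0 = -\<phi>/(2*k)"
  have L: "L > 0" using k by (simp add: L_def)
  have fc: "continuous_on S f" for S unfolding f_def by (intro continuous_intros)
  have per: "f (u + L) = f u" for u
  proof -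
    have "2*k*(u+L) + \<phi> = (2*k*u + \<phi>) + 2*pi" using k by (simp add: L_def field_simps)
    thus ?thesis unfolding f_def by (metis sin_periodic)
  qed
  define c where "c = min x x0"
  define d where "d = max x x0"
  have cd: "c \<le> d" by (simp add: c_def d_def)
  define \<Phi> where "\<Phi> v = integral {c..v} f" for v
  define H where "H u = \<Phi> (u + L) - \<Phi> u" for u
  have HF: "H u = integral {u..u+L} f" if "c \<le> u" for u
  proof -
    have "integral {c..u} f + integral {u..u+L} f = integral {c..u+L} f"
      using that L by (intro Henstock_Kurzweil_Integration.integral_combine integrable_continuous_real fc) auto
    thus ?thesis unfolding H_def \<Phi>_def by simp
  qed
  have Hd: "(H has_field_derivative 0) (at u within {c..d})" if u: "u \<in> {c..d}" for u
  proof -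
    have d1: "(\<Phi> has_field_derivative f u) (at u within {c..d})"
    proof -
      have "(\<Phi> has_field_derivative f u) (at u within {c..d+L})"
        unfolding \<Phi>_def using u L by (intro integral_has_real_derivative fc) auto
      thus ?thesis by (rule has_field_derivative_subset) (use L in auto)
    qed
    have d2: "((\<lambda>u. \<Phi> (u + L)) has_field_derivative f (u + L) * 1) (at u within {c..d})"
    proof -
      have "(\<Phi> has_field_derivative f (u + L)) (at (u + L) within {c..d+L})"
        unfolding \<Phi>_def using u L by (intro integral_has_real_derivative fc) auto
      hence a: "(\<Phi> has_field_derivative f (u + L)) (at (u + L) within ((\<lambda>u. u + L) ` {c..d}))"
        by (rule has_field_derivative_subset) (use L in auto)
      have b: "((\<lambda>u. u + L) has_field_derivative 1) (at u within {c..d})"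
        by (auto intro!: derivative_eq_intros)
      show ?thesis using DERIV_image_chain[OF a b] by (simp add: o_def)
    qed
    have "(H has_field_derivative (f (u + L) * 1 - f u)) (at u within {c..d})"
      unfolding H_def by (intro DERIV_diff d1 d2)
    thus ?thesis by (simp add: per)
  qed
  have Hd': "(H has_derivative (\<lambda>h. 0)) (at u within {c..d})" if u: "u \<in> {c..d}" for u
    using Hd[OF u] by (simp add: has_field_derivative_def lambda_zero)
  have Hc: "continuous_on {c..d} H"
    using Hd by (intro DERIV_continuous_on) auto
  have "H x = H c"
    by (rule has_derivative_zero_unique_strong_interval[of "{}" c d H, OF _ Hc refl])
       (use Hd' in \<open>auto simp: c_def d_def\<close>)
  moreover have "H x0 = H c"
    by (rule has_derivative_zero_unique_strong_interval[of "{}" c d H, OF _ Hc refl])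
       (use Hd' in \<open>auto simp: c_def d_def\<close>)
  ultimately have "integral {x..x+L} f = integral {x0..x0+L} f"
    using HF[of x] HF[of x0] by (simp add: c_def)
  also have "\<dots> = 2/k" using int_abs_sin_base[OF k, of \<phi>] unfolding f_def L_def x0_def
    by (simp add: integral_unique)
  finally show ?thesis
    using integrable_continuous_real[OF fc, of x "x+L"] unfolding f_def L_def
    by (metis integrable_integral)
qed

lemma deriv_aux3: "k > 0 \<Longrightarrow> ((\<lambda>t. t/2 - sin(2*k*t+2*\<psi>)/(4*k)) has_real_derivative (sin(k*t+\<psi>))\<^sup>2) (at t within S)" for k::real
proof -
  assume k: "k > 0"
  have "((\<lambda>t. t/2 - sin(2*k*t+2*\<psi>)/(4*k)) has_real_derivative (1/2 - cos(2*k*t+2*\<psi>)/2)) (at t within S)"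
    using k by - (rule derivative_eq_intros refl | simp)+
  moreover have "1/2 - cos(2*k*t+2*\<psi>)/2 = (sin(k*t+\<psi>))\<^sup>2"
  proof -
    have "cos(2*k*t+2*\<psi>) = cos (2*(k*t+\<psi>))" by (simp add: algebra_simps)
    also have "\<dots> = 1 - 2 * (sin(k*t+\<psi>))\<^sup>2" by (rule cos_double_sin)
    finally show ?thesis by (simp add: field_simps)
  qed
  ultimately show ?thesis by simp
qed

lemma int_sin_sq:
  fixes k \<psi> x :: real
  assumes k: "k > 0"
  shows "((\<lambda>t. (sin (k*t + \<psi>))\<^sup>2) has_integral pi/(2*k)) {x..x + pi/k}"
proof -
  have xl: "x \<le> x + pi/k" using k by simp
  have I: "((\<lambda>t. (sin (k*t + \<psi>))\<^sup>2) has_integral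
     ((x + pi/k)/2 - sin(2*k*(x+pi/k)+2*\<psi>)/(4*k) - (x/2 - sin(2*k*x+2*\<psi>)/(4*k)))) {x..x+pi/k}"
    by (rule fundamental_theorem_of_calculus[OF xl])
       (use deriv_aux3[OF k] in \<open>simp add: has_real_derivative_iff_has_vector_derivative[symmetric]\<close>)
  have "2*k*(x+pi/k)+2*\<psi> = (2*k*x+2*\<psi>) + 2*pi" using k by (simp add: field_simps)
  hence "sin(2*k*(x+pi/k)+2*\<psi>) = sin(2*k*x+2*\<psi>)" by (metis sin_periodic)
  hence "(x + pi/k)/2 - sin(2*k*(x+pi/k)+2*\<psi>)/(4*k) - (x/2 - sin(2*k*x+2*\<psi>)/(4*k)) = pi/(2*k)"
    by (simp add: field_simps)
  thus ?thesis using I by simp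
qed

lemma has_integral_Complex:
  assumes "(f1 has_integral y1) S" "(f2 has_integral y2) S"
  shows "((\<lambda>t. Complex (f1 t) (f2 t)) has_integral Complex y1 y2) S"
proof -
  have "((\<lambda>t. of_real (f1 t) + \<i> * of_real (f2 t)) has_integral (of_real y1 + \<i> * of_real y2)) S"
    by (intro has_integral_add has_integral_mult_right has_integral_of_real assms)
  thus ?thesis by (simp add: complex_eq_iff Complex_eq)
qed

lemma abs_int_Complex:
  fixes f1 f2 :: "real \<Rightarrow> real"
  assumes "f1 absolutely_integrable_on S" "f2 absolutely_integrable_on S"
  shows "(\<lambda>t. Complex (f1 t) (f2 t)) absolutely_integrable_on S"
proof (rule absolutely_integrable_integrable_bound[where g = "\<lambda>t. \<bar>f1 t\<bar> + \<bar>f2 t\<bar>"])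
  show "norm (Complex (f1 t) (f2 t)) \<le> \<bar>f1 t\<bar> + \<bar>f2 t\<bar>" for t
    using cmod_le[of "Complex (f1 t) (f2 t)"] by simp
  show "(\<lambda>t. Complex (f1 t) (f2 t)) integrable_on S"
    using has_integral_Complex[of f1 "integral S f1" S f2 "integral S f2"] assms
    by (auto simp: absolutely_integrable_on_def integrable_on_def)
  show "(\<lambda>t. \<bar>f1 t\<bar> + \<bar>f2 t\<bar>) integrable_on S"
    using assms by (intro integrable_add) (auto simp: absolutely_integrable_on_def)
qed

lemma cont_abs_int:
  fixes f :: "real \<Rightarrow> real" and V :: "real \<Rightarrow> real"
  assumes "continuous_on {s..t} f" "V absolutely_integrable_on {s..t}"
  shows "(\<lambda>x. f x * V x) absolutely_integrable_on {s..t}"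
proof (rule absolutely_integrable_bounded_measurable_product_real)
  show "f \<in> borel_measurable (lebesgue_on {s..t})"
    by (rule continuous_imp_measurable_on_sets_lebesgue[OF assms(1)]) auto
  show "bounded (f ` {s..t})" by (intro compact_imp_bounded compact_continuous_image assms(1)) auto
qed (use assms in auto)

lemma vop:
  fixes V w w' :: "real \<Rightarrow> real" and k x0 :: real
  assumes k: "k > 0"
  and Vi: "\<And>s t. x0 \<le> s \<Longrightarrow> s \<le> t \<Longrightarrow> V absolutely_integrable_on {s..t}"
  and wd: "\<And>x. x0 \<le> x \<Longrightarrow> (w has_real_derivative w' x) (at x within {x0..})"
  and w'i: "\<And>y x. x0 \<le> y \<Longrightarrow> y \<le> x \<Longrightarrow> ((\<lambda>t. (V t - k\<^sup>2) * w t) has_integral (w' x - w' y)) {y..x}"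
  and v_def: "\<And>t. v t = Complex (w' t / k) (w t) * cis (-(k*t))"
  shows vint: "\<And>s t. x0 \<le> s \<Longrightarrow> s \<le> t \<Longrightarrow>
      ((\<lambda>\<tau>. of_real (V \<tau> * w \<tau> / k) * cis (-(k*\<tau>))) has_integral (v t - v s)) {s..t}"
  and vcont: "\<And>s t. x0 \<le> s \<Longrightarrow> continuous_on {s..t} v"
  and wcont: "\<And>s t. x0 \<le> s \<Longrightarrow> continuous_on {s..t} w"
  and wv: "\<And>t. w t = Im (v t * cis (k*t))"
proof -
  have wc: "continuous_on {s..t} w" if s: "x0 \<le> s" for s t
  proof -
    have "(w has_real_derivative w' x) (at x within {s..t})" if "x \<in> {s..t}" for x
    proof -
      have "x0 \<le> x" using that s by auto
      from has_field_derivative_subset[OF wd[OF this]] show ?thesis using s by auto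
    qed
    thus ?thesis by (rule DERIV_continuous_on)
  qed
  have w'c: "continuous_on {s..t} w'" if s: "x0 \<le> s" for s t
  proof (cases "s \<le> t")
    case True
    have gi: "(\<lambda>t. (V t - k\<^sup>2) * w t) integrable_on {s..t}" using w'i[OF s True] by blast
    have "continuous_on {s..t} (\<lambda>x. w' s + integral {s..x} (\<lambda>t. (V t - k\<^sup>2) * w t))"
      by (intro continuous_intros indefinite_integral_continuous_1 gi)
    moreover have "w' s + integral {s..x} (\<lambda>t. (V t - k\<^sup>2) * w t) = w' x" if "x \<in> {s..t}" for x
      using w'i[of s x] that s by (simp add: integral_unique)
    ultimately show ?thesis using continuous_on_cong by (metis (no_types, lifting))
  next
    case False thus ?thesis by simp
  qed
  show "\<And>s t. x0 \<le> s \<Longrightarrow> continuous_on {s..t} w" by (rule wc)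
  have Pc: "continuous_on {s..t} (\<lambda>t. Complex (w' t / k) (w t))" if "x0 \<le> s" for s t
    using w'c[OF that] wc[OF that] k by (intro continuous_intros) auto
  show vc: "continuous_on {s..t} v" if "x0 \<le> s" for s t
  proof -
    have veq: "v = (\<lambda>t. Complex (w' t / k) (w t) * cis (-(k*t)))" using v_def by auto
    show ?thesis unfolding veq by (intro continuous_on_mult Pc[OF that] continuous_intros)
  qed
  show "w t = Im (v t * cis (k*t))" for t
  proof -
    have "v t * cis (k*t) = Complex (w' t / k) (w t) * (cis (-(k*t)) * cis (k*t))"
      by (simp add: v_def)
    also have "cis (-(k*t)) * cis (k*t) = 1" by (simp add: cis_mult)
    finally show ?thesis by simp
  qed
  show "((\<lambda>\<tau>. of_real (V \<tau> * w \<tau> / k) * cis (-(k*\<tau>))) has_integral (v t - v s)) {s..t}"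
    if s: "x0 \<le> s" and st: "s \<le> t" for s t
  proof -
    define P where "P t = Complex (w' t / k) (w t)" for t
    define Q where "Q t = cis (-(k*t))" for t
    define g where "g t = Complex ((V t - k\<^sup>2) * w t / k) (w' t)" for t
    define h where "h t = Complex (-k * sin (k*t)) (-k * cos (k*t))" for t
    have Qc: "continuous_on {s..t} Q" unfolding Q_def by (intro continuous_intros)
    have Vst: "V absolutely_integrable_on {s..t}" using Vi[OF s st] .
    have g1: "(\<lambda>x. (V x - k\<^sup>2) * w x / k) absolutely_integrable_on {s..t}"
    proof -
      have "(\<lambda>x. V x - k\<^sup>2) absolutely_integrable_on {s..t}"
        using Vst by (intro set_integral_diff(1)) auto
      hence "(\<lambda>x. (w x / k) * (V x - k\<^sup>2)) absolutely_integrable_on {s..t}"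
        using k by (intro cont_abs_int continuous_intros wc[OF s]) auto
      thus ?thesis by (simp add: mult.commute)
    qed
    have gi: "g absolutely_integrable_on {s..t}"
      unfolding g_def by (intro abs_int_Complex g1 absolutely_integrable_continuous_real w'c[OF s])
    have hi: "h absolutely_integrable_on {s..t}"
      unfolding h_def by (intro absolutely_integrable_continuous_real continuous_intros)
    have Pg: "(g has_integral (P b - P a)) {a..b}" if ab: "s \<le> a" "a \<le> b" "b \<le> t" for a b
    proof -
      have "((\<lambda>t. (V t - k\<^sup>2) * w t / k) has_integral ((w' b - w' a) / k)) {a..b}"
        using w'i[of a b] ab s by (intro has_integral_divide) auto
      moreover have "(w' has_integral (w b - w a)) {a..b}"
      proof (rule fundamental_theorem_of_calculus[OF ab(2)])
        fix x assume x: "x \<in> {a..b}"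
        have "x0 \<le> x" using x ab s by auto
        from has_field_derivative_subset[OF wd[OF this]]
        have "(w has_real_derivative w' x) (at x within {a..b})" using ab s by auto
        thus "(w has_vector_derivative w' x) (at x within {a..b})"
          by (simp add: has_real_derivative_iff_has_vector_derivative)
      qed
      ultimately have "(g has_integral Complex ((w' b - w' a) / k) (w b - w a)) {a..b}"
        unfolding g_def by (rule has_integral_Complex)
      moreover have "Complex ((w' b - w' a) / k) (w b - w a) = P b - P a"
        by (simp add: P_def complex_eq_iff diff_divide_distrib)
      ultimately show ?thesis by simp
    qed
    have Qh: "(h has_integral (Q b - Q a)) {a..b}" if ab: "s \<le> a" "a \<le> b" "b \<le> t" for a b
    proof -
      have d1: "((\<lambda>t. cos (k*t)) has_real_derivative -k * sin (k*t)) (at t within S)" for t S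
        by (rule derivative_eq_intros refl | simp)+
      have d2: "((\<lambda>t. - sin (k*t)) has_real_derivative -k * cos (k*t)) (at t within S)" for t S
        by (rule derivative_eq_intros refl | simp)+
      have "((\<lambda>t. -k * sin (k*t)) has_integral (cos (k*b) - cos (k*a))) {a..b}"
        by (rule fundamental_theorem_of_calculus[OF ab(2)])
           (use d1 in \<open>simp add: has_real_derivative_iff_has_vector_derivative[symmetric]\<close>)
      moreover have "((\<lambda>t. -k * cos (k*t)) has_integral (- sin (k*b) - - sin (k*a))) {a..b}"
        by (rule fundamental_theorem_of_calculus[OF ab(2)])
           (use d2 in \<open>simp add: has_real_derivative_iff_has_vector_derivative[symmetric]\<close>)
      ultimately have "(h has_integral Complex (cos (k*b) - cos (k*a)) (- sin (k*b) - - sin (k*a))) {a..b}"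
        unfolding h_def by (rule has_integral_Complex)
      moreover have "Complex (cos (k*b) - cos (k*a)) (- sin (k*b) - - sin (k*a)) = Q b - Q a"
        by (simp add: Q_def complex_eq_iff)
      ultimately show ?thesis by simp
    qed
    have PR: "((\<lambda>t. g t * Q t + P t * h t) has_integral (P t * Q t - P s * Q s)) {s..t}"
      by (rule prod_rule[OF st _ Qc gi hi Pg Qh]) (use Pc[OF s] in \<open>auto simp: P_def\<close>)
    have eq: "g \<tau> * Q \<tau> + P \<tau> * h \<tau> = of_real (V \<tau> * w \<tau> / k) * cis (-(k*\<tau>))" for \<tau>
      using k by (simp add: g_def Q_def P_def h_def complex_eq_iff field_simps power2_eq_square)
    have "v t - v s = P t * Q t - P s * Q s" by (simp add: v_def P_def Q_def)
    thus ?thesis using PR unfolding eq by simp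
  qed
qed

lemma abs_int_abs:
  fixes V :: "real \<Rightarrow> real"
  assumes "V absolutely_integrable_on S"
  shows "(\<lambda>x. \<bar>V x\<bar>) absolutely_integrable_on S"
proof (rule absolutely_integrable_integrable_bound[where g = "\<lambda>x. \<bar>V x\<bar>"])
  show "(\<lambda>x. \<bar>V x\<bar>) integrable_on S" using assms by (simp add: absolutely_integrable_on_def)
qed (use assms in \<open>auto simp: absolutely_integrable_on_def\<close>)

lemma loc_bound:
  fixes v :: "real \<Rightarrow> complex" and q :: "real \<Rightarrow> real"
  assumes st: "s \<le> t"
  and vc: "continuous_on {s..t} v"
  and q0: "\<And>r. r \<in> {s..t} \<Longrightarrow> 0 \<le> q r"
  and qi: "q integrable_on {s..t}"
  and qvi: "(\<lambda>r. q r * norm (v r)) integrable_on {s..t}"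
  and qk: "integral {s..t} q \<le> \<kappa>" and \<kappa>: "\<kappa> < 1"
  and H: "\<And>r. r \<in> {s..t} \<Longrightarrow> norm (v r - v s) \<le> integral {s..r} (\<lambda>\<tau>. q \<tau> * norm (v \<tau>))"
  shows "\<And>r. r \<in> {s..t} \<Longrightarrow> norm (v r - v s) \<le> \<kappa> * norm (v s) / (1 - \<kappa>)"
    and "\<And>r. r \<in> {s..t} \<Longrightarrow> norm (v r) \<le> norm (v s) / (1 - \<kappa>)"
proof -
  have "\<exists>x\<in>{s..t}. \<forall>y\<in>{s..t}. norm (v y) \<le> norm (v x)"
    using st by (intro continuous_attains_sup continuous_intros vc) auto
  then obtain rs where rs: "rs \<in> {s..t}" and rsM: "\<And>y. y \<in> {s..t} \<Longrightarrow> norm (v y) \<le> norm (v rs)" by blast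
  define M where "M = norm (v rs)"
  have M0: "M \<ge> 0" by (simp add: M_def)
  have k0: "\<kappa> \<ge> 0" using qk integral_nonneg[OF qi q0] by linarith
  have bnd: "norm (v r - v s) \<le> \<kappa> * M" if r: "r \<in> {s..t}" for r
  proof -
    have sub: "{s..r} \<subseteq> {s..t}" using r by auto
    have i1: "(\<lambda>\<tau>. q \<tau> * norm (v \<tau>)) integrable_on {s..r}" using qvi sub integrable_subinterval_real by blast
    have i2: "q integrable_on {s..r}" using qi sub integrable_subinterval_real by blast
    have "integral {s..r} (\<lambda>\<tau>. q \<tau> * norm (v \<tau>)) \<le> integral {s..r} (\<lambda>\<tau>. q \<tau> * M)"
    proof (rule integral_le[OF i1])
      show "(\<lambda>\<tau>. q \<tau> * M) integrable_on {s..r}" using integrable_on_mult_left[OF i2] by simp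
      show "q x * norm (v x) \<le> q x * M" if "x \<in> {s..r}" for x
        using that sub q0 rsM unfolding M_def by (intro mult_left_mono) auto
    qed
    also have "\<dots> = integral {s..r} q * M" by simp
    also have "\<dots> \<le> integral {s..t} q * M"
      using M0 integral_subset_le[OF sub i2 qi] q0 by (intro mult_right_mono) auto
    also have "\<dots> \<le> \<kappa> * M" using M0 qk by (intro mult_right_mono) auto
    finally show ?thesis using H[OF r] by linarith
  qed
  have "M \<le> norm (v s) + norm (v rs - v s)" unfolding M_def by (metis norm_triangle_sub)
  hence "M \<le> norm (v s) + \<kappa> * M" using bnd[OF rs] by linarith
  hence "M * (1 - \<kappa>) \<le> norm (v s)" by (simp add: algebra_simps)
  hence Mb: "M \<le> norm (v s) / (1 - \<kappa>)" using \<kappa> by (simp add: field_simps)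
  show "norm (v r) \<le> norm (v s) / (1 - \<kappa>)" if "r \<in> {s..t}" for r
    using rsM[OF that] Mb unfolding M_def by linarith
  show "norm (v r - v s) \<le> \<kappa> * norm (v s) / (1 - \<kappa>)" if "r \<in> {s..t}" for r
  proof -
    have "norm (v r - v s) \<le> \<kappa> * M" by (rule bnd[OF that])
    also have "\<dots> \<le> \<kappa> * (norm (v s) / (1 - \<kappa>))" using Mb k0 by (intro mult_left_mono) auto
    finally show ?thesis by simp
  qed
qed

lemma polar_Im: "Im (v * cis x) = cmod v * sin (Arg v + x)"
proof -
  have "v * cis x = complex_of_real (cmod v) * cis (Arg v) * cis x"
    using rcis_cmod_Arg[of v] by (simp add: rcis_def)
  also have "\<dots> = complex_of_real (cmod v) * cis (Arg v + x)" by (simp add: cis_mult mult.assoc)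
  finally show ?thesis by simp
qed

lemma polar_Re_cnj: "Re (cnj v * (complex_of_real X * cis (- y))) = X * cmod v * cos (Arg v + y)"
proof -
  have cv: "cnj v = complex_of_real (cmod v) * cis (- Arg v)"
    using rcis_cmod_Arg[of v] by (metis cis_cnj complex_cnj_complex_of_real complex_cnj_mult rcis_def)
  have e1: "cis (- Arg v) * cis (- y) = cis (- (Arg v + y))" by (simp add: cis_mult)
  have "cnj v * (complex_of_real X * cis (- y)) = complex_of_real (cmod v * X) * (cis (- Arg v) * cis (- y))"
    unfolding cv by (simp only: of_real_mult mult_ac)
  also have "\<dots> = complex_of_real (cmod v * X) * cis (- (Arg v + y))" by (simp only: e1)
  finally have eq: "cnj v * (complex_of_real X * cis (- y)) = complex_of_real (cmod v * X) * cis (- (Arg v + y))" .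
  have re: "Re (complex_of_real a * cis b) = a * cos b" for a b by simp
  show ?thesis unfolding eq re cos_minus by (simp add: mult.commute)
qed

lemma norm_add_sq: "(cmod (z + d))\<^sup>2 = (cmod z)\<^sup>2 + 2 * Re (cnj z * d) + (cmod d)\<^sup>2"
  by (simp only: cmod_power2) (simp add: power2_eq_square algebra_simps)

lemma sq_lower: fixes f e r :: real assumes "\<bar>f\<bar> \<le> r" "\<bar>e\<bar> \<le> d" shows "(f + e)\<^sup>2 \<ge> f\<^sup>2 - 2 * r * d"
proof -
  have "\<bar>2 * f * e\<bar> \<le> 2 * r * d" using assms
    by (simp add: abs_mult mult_mono' mult.assoc)
  hence "2 * f * e \<ge> - 2 * r * d" by linarith
  moreover have "(f + e)\<^sup>2 = f\<^sup>2 + 2 * f * e + e\<^sup>2" by (simp add: power2_eq_square algebra_simps)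
  moreover have "e\<^sup>2 \<ge> 0" by simp
  ultimately show ?thesis by linarith
qed

lemma step:
  fixes v :: "real \<Rightarrow> complex" and V w :: "real \<Rightarrow> real" and k a \<rho> :: real
  assumes k: "k > 0" and \<rho>0: "\<rho> \<ge> 0"
  and Vb: "\<And>\<tau>. \<tau> \<in> {a..a+pi/k} \<Longrightarrow> \<bar>V \<tau>\<bar> / k \<le> \<rho>"
  and Vi: "V absolutely_integrable_on {a..a+pi/k}"
  and vc: "continuous_on {a..a+pi/k} v"
  and wc: "continuous_on {a..a+pi/k} w"
  and wv: "\<And>\<tau>. w \<tau> = Im (v \<tau> * cis (k*\<tau>))"
  and vint: "\<And>s t. a \<le> s \<Longrightarrow> s \<le> t \<Longrightarrow> t \<le> a+pi/k \<Longrightarrow>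
      ((\<lambda>\<tau>. of_real (V \<tau> * w \<tau> / k) * cis (-(k*\<tau>))) has_integral (v t - v s)) {s..t}"
  and small: "\<rho> * (pi/k) \<le> 1/4"
  shows "(cmod (v (a+pi/k)))\<^sup>2 \<ge> (cmod (v a))\<^sup>2 * (1 - 2*\<rho>/k - 4*\<rho>\<^sup>2*(pi/k)\<^sup>2)"
    and "integral {a..a+pi/k} (\<lambda>\<tau>. (w \<tau>)\<^sup>2) \<ge> (cmod (v a))\<^sup>2 * (pi/(2*k) - 4*\<rho>*(pi/k)\<^sup>2)"
proof -
  define L where "L = pi/k"
  define b where "b = a + L"
  have L: "L > 0" using k by (simp add: L_def)
  have ab: "a \<le> b" using L by (simp add: b_def)
  define q where "q \<tau> = \<bar>V \<tau>\<bar> / k" for \<tau>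
  define F where "F \<tau> = of_real (V \<tau> * w \<tau> / k) * cis (-(k*\<tau>))" for \<tau>
  have nw: "\<bar>w \<tau>\<bar> \<le> cmod (v \<tau>)" for \<tau>
    using abs_Im_le_cmod[of "v \<tau> * cis (k*\<tau>)"] by (simp add: wv norm_mult)
  have aVi: "(\<lambda>x. \<bar>V x\<bar>) absolutely_integrable_on {a..b}" using abs_int_abs[OF Vi] by (simp add: b_def L_def)
  have qi: "q integrable_on {a..b}"
  proof -
    have "((\<lambda>x. \<bar>V x\<bar>) has_integral integral {a..b} (\<lambda>x. \<bar>V x\<bar>)) {a..b}"
      by (intro integrable_integral) (use aVi in \<open>simp add: absolutely_integrable_on_def\<close>)
    from has_integral_divide[OF this, of k] show ?thesis unfolding q_def by blast
  qed
  have qvi: "(\<lambda>r. q r * cmod (v r)) integrable_on {a..b}"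
  proof -
    have "(\<lambda>x. cmod (v x) / k * \<bar>V x\<bar>) absolutely_integrable_on {a..b}"
      using k vc by (intro cont_abs_int aVi continuous_intros) (auto simp: b_def L_def)
    hence "(\<lambda>x. cmod (v x) / k * \<bar>V x\<bar>) integrable_on {a..b}" by (simp add: absolutely_integrable_on_def)
    moreover have "(\<lambda>x. cmod (v x) / k * \<bar>V x\<bar>) = (\<lambda>r. q r * cmod (v r))" by (auto simp: q_def)
    ultimately show ?thesis by simp
  qed
  have q0: "\<And>r. r \<in> {a..b} \<Longrightarrow> 0 \<le> q r" using k by (simp add: q_def)
  have qb: "\<And>r. r \<in> {a..b} \<Longrightarrow> q r \<le> \<rho>" using Vb by (simp add: q_def b_def L_def)
  have qk: "integral {a..b} q \<le> \<rho> * L"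
  proof -
    have "integral {a..b} q \<le> integral {a..b} (\<lambda>x. \<rho>)"
      by (rule integral_le[OF qi]) (use qb in auto)
    also have "\<dots> = \<rho> * L" using ab by (simp add: b_def)
    finally show ?thesis .
  qed
  have Fi: "(F has_integral (v t - v s)) {s..t}" if "a \<le> s" "s \<le> t" "t \<le> b" for s t
    using vint[of s t] that unfolding F_def b_def L_def by auto
  have H: "cmod (v r - v a) \<le> integral {a..r} (\<lambda>\<tau>. q \<tau> * cmod (v \<tau>))" if r: "r \<in> {a..b}" for r
  proof -
    have Far: "(F has_integral (v r - v a)) {a..r}" using Fi[of a r] r by auto
    have "cmod (v r - v a) = cmod (integral {a..r} F)" using Far by (simp add: integral_unique)
    also have "\<dots> \<le> integral {a..r} (\<lambda>\<tau>. q \<tau> * cmod (v \<tau>))"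
    proof (rule integral_norm_bound_integral)
      show "F integrable_on {a..r}" using Far by blast
      show "(\<lambda>\<tau>. q \<tau> * cmod (v \<tau>)) integrable_on {a..r}"
        using qvi r integrable_subinterval_real[of _ a b a r] by auto
      fix \<tau> assume "\<tau> \<in> {a..r}"
      have "cmod (F \<tau>) = \<bar>V \<tau> * w \<tau> / k\<bar>" unfolding F_def norm_mult norm_cis norm_of_real by simp
      also have "\<dots> = \<bar>V \<tau>\<bar> * \<bar>w \<tau>\<bar> / k" using k by (simp add: abs_mult)
      also have "\<dots> \<le> \<bar>V \<tau>\<bar> * cmod (v \<tau>) / k"
        using k nw by (intro divide_right_mono mult_left_mono) auto
      finally show "cmod (F \<tau>) \<le> q \<tau> * cmod (v \<tau>)" by (simp add: q_def)
    qed
    finally show ?thesis .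
  qed
  define \<kappa> where "\<kappa> = \<rho> * L"
  have \<kappa>s: "\<kappa> \<le> 1/4" using small by (simp add: \<kappa>_def L_def)
  have \<kappa>0: "\<kappa> \<ge> 0" using \<rho>0 L by (simp add: \<kappa>_def)
  have LB: "cmod (v r - v a) \<le> \<kappa> * cmod (v a) / (1 - \<kappa>)" if "r \<in> {a..b}" for r
  proof -
    have \<kappa>1: "\<kappa> < 1" using \<kappa>s by simp
    have qk': "integral {a..b} q \<le> \<kappa>" using qk by (simp add: \<kappa>_def)
    have vc': "continuous_on {a..b} v" using vc by (simp add: b_def L_def)
    show ?thesis by (rule loc_bound(1)[OF ab vc' q0 qi qvi qk' \<kappa>1 H that])
  qed
  define \<delta> where "\<delta> = 2 * \<rho> * L"
  define r0 where "r0 = cmod (v a)"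
  have r00: "r0 \<ge> 0" by (simp add: r0_def)
  have dv: "cmod (v r - v a) \<le> \<delta> * r0" if "r \<in> {a..b}" for r
  proof -
    have "\<kappa> * cmod (v a) / (1 - \<kappa>) \<le> 2 * \<kappa> * cmod (v a)"
    proof -
      have "\<kappa> * cmod (v a) \<le> 2 * \<kappa> * cmod (v a) * (1 - \<kappa>)"
      proof -
        have "\<kappa> * cmod (v a) * 1 \<le> \<kappa> * cmod (v a) * (2 * (1 - \<kappa>))"
          using \<kappa>s \<kappa>0 by (intro mult_left_mono) auto
        thus ?thesis by (simp add: algebra_simps)
      qed
      thus ?thesis using \<kappa>s by (simp add: field_simps)
    qed
    thus ?thesis using LB[OF that] by (simp add: \<delta>_def \<kappa>_def r0_def)
  qed
  define \<psi> where "\<psi> = Arg (v a)"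
  define f where "f \<tau> = r0 * sin (\<psi> + k*\<tau>)" for \<tau>
  have wf: "\<bar>w \<tau> - f \<tau>\<bar> \<le> \<delta> * r0" if "\<tau> \<in> {a..b}" for \<tau>
  proof -
    have "f \<tau> = Im (v a * cis (k*\<tau>))" by (simp only: f_def polar_Im r0_def \<psi>_def)
    hence "w \<tau> - f \<tau> = Im ((v \<tau> - v a) * cis (k*\<tau>))" by (simp add: wv algebra_simps)
    hence "\<bar>w \<tau> - f \<tau>\<bar> \<le> cmod (v \<tau> - v a)"
      using abs_Im_le_cmod[of "(v \<tau> - v a) * cis (k*\<tau>)"] by (simp add: norm_mult)
    thus ?thesis using dv[OF that] by linarith
  qed
  have fb: "\<bar>f \<tau>\<bar> \<le> r0" for \<tau>
    using r00 by (simp add: f_def abs_mult mult_left_le)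
  have wi: "(\<lambda>\<tau>. (w \<tau>)\<^sup>2) integrable_on {a..b}"
    using wc by (intro integrable_continuous_real continuous_intros) (simp add: b_def L_def)
  have low2: "((\<lambda>\<tau>. r0\<^sup>2 * (sin (k*\<tau> + \<psi>))\<^sup>2 - 2 * r0 * (\<delta> * r0)) has_integral
        (r0\<^sup>2 * (pi/(2*k)) - L * (2 * r0 * (\<delta> * r0)))) {a..b}"
  proof -
    have "((\<lambda>\<tau>. r0\<^sup>2 * (sin (k*\<tau> + \<psi>))\<^sup>2) has_integral r0\<^sup>2 * (pi/(2*k))) {a..b}"
    proof -
      have "((\<lambda>\<tau>. r0\<^sup>2 * (sin (k*\<tau> + \<psi>))\<^sup>2) has_integral r0\<^sup>2 * (pi/(2*k))) {a..a+pi/k}"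
        by (rule has_integral_mult_right[OF int_sin_sq[OF k]])
      thus ?thesis by (simp only: b_def L_def)
    qed
    moreover have "((\<lambda>\<tau>. 2 * r0 * (\<delta> * r0)) has_integral L * (2 * r0 * (\<delta> * r0))) {a..b}"
      using has_integral_const_real[of "2 * r0 * (\<delta> * r0)" a b] ab by (simp add: b_def)
    ultimately show ?thesis by (rule has_integral_diff)
  qed
  have "r0\<^sup>2 * (pi/(2*k)) - L * (2 * r0 * (\<delta> * r0)) \<le> integral {a..b} (\<lambda>\<tau>. (w \<tau>)\<^sup>2)"
  proof (rule has_integral_le[OF low2 integrable_integral[OF wi]])
    fix \<tau> assume t: "\<tau> \<in> {a..b}"
    have "(f \<tau> + (w \<tau> - f \<tau>))\<^sup>2 \<ge> (f \<tau>)\<^sup>2 - 2 * r0 * (\<delta> * r0)"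
      by (rule sq_lower[OF fb wf[OF t]])
    moreover have "(f \<tau>)\<^sup>2 = r0\<^sup>2 * (sin (k*\<tau> + \<psi>))\<^sup>2" by (simp add: f_def power_mult_distrib add.commute)
    ultimately show "r0\<^sup>2 * (sin (k*\<tau> + \<psi>))\<^sup>2 - 2 * r0 * (\<delta> * r0) \<le> (w \<tau>)\<^sup>2" by simp
  qed
  thus "integral {a..a+pi/k} (\<lambda>\<tau>. (w \<tau>)\<^sup>2) \<ge> (cmod (v a))\<^sup>2 * (pi/(2*k) - 4*\<rho>*(pi/k)\<^sup>2)"
    by (simp add: b_def L_def \<delta>_def r0_def power2_eq_square algebra_simps)
  define D where "D = v b - v a"
  have FD: "(F has_integral D) {a..b}" using Fi[of a b] ab by (simp add: D_def)
  have ReD: "((\<lambda>\<tau>. Re (cnj (v a) * F \<tau>)) has_integral Re (cnj (v a) * D)) {a..b}"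
    using has_integral_linear[OF has_integral_mult_right[OF FD, of "cnj (v a)"] bounded_linear_Re]
    by (simp add: o_def)
  have low1: "((\<lambda>\<tau>. - (\<rho> * r0\<^sup>2 / 2) * \<bar>sin (2*k*\<tau> + 2*\<psi>)\<bar> - \<rho> * \<delta> * r0\<^sup>2) has_integral
       (- (\<rho> * r0\<^sup>2 / 2) * (2/k) - L * (\<rho> * \<delta> * r0\<^sup>2))) {a..b}"
  proof -
    have "((\<lambda>\<tau>. - (\<rho> * r0\<^sup>2 / 2) * \<bar>sin (2*k*\<tau> + 2*\<psi>)\<bar>) has_integral - (\<rho> * r0\<^sup>2 / 2) * (2/k)) {a..b}"
    proof -
      have "((\<lambda>\<tau>. - (\<rho> * r0\<^sup>2 / 2) * \<bar>sin (2*k*\<tau> + 2*\<psi>)\<bar>) has_integral - (\<rho> * r0\<^sup>2 / 2) * (2/k)) {a..a+pi/k}"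
        by (rule has_integral_mult_right[OF int_abs_sin[OF k]])
      thus ?thesis by (simp only: b_def L_def)
    qed
    moreover have "((\<lambda>\<tau>. \<rho> * \<delta> * r0\<^sup>2) has_integral L * (\<rho> * \<delta> * r0\<^sup>2)) {a..b}"
      using has_integral_const_real[of "\<rho> * \<delta> * r0\<^sup>2" a b] ab by (simp add: b_def)
    ultimately show ?thesis by (rule has_integral_diff)
  qed
  have ReDb: "- (\<rho> * r0\<^sup>2 / 2) * (2/k) - L * (\<rho> * \<delta> * r0\<^sup>2) \<le> Re (cnj (v a) * D)"
  proof (rule has_integral_le[OF low1 ReD])
    fix \<tau> assume t: "\<tau> \<in> {a..b}"
    define X where "X = V \<tau> * w \<tau> / k"
    define \<theta> where "\<theta> = \<psi> + k*\<tau>"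
    have eq: "Re (cnj (v a) * F \<tau>) = X * r0 * cos \<theta>"
      unfolding F_def X_def \<theta>_def r0_def \<psi>_def by (rule polar_Re_cnj)
    have Xb: "\<bar>X\<bar> \<le> \<rho> * \<bar>w \<tau>\<bar>"
    proof -
      have "\<bar>X\<bar> = q \<tau> * \<bar>w \<tau>\<bar>" using k by (simp add: X_def q_def abs_mult)
      also have "\<dots> \<le> \<rho> * \<bar>w \<tau>\<bar>" using qb[OF t] by (intro mult_right_mono) auto
      finally show ?thesis .
    qed
    have wb: "\<bar>w \<tau>\<bar> \<le> r0 * \<bar>sin \<theta>\<bar> + \<delta> * r0"
    proof -
      have fa: "\<bar>f \<tau>\<bar> = r0 * \<bar>sin \<theta>\<bar>" by (simp add: f_def \<theta>_def abs_mult r00)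
      show ?thesis using wf[OF t] fa by linarith
    qed
    have "\<bar>X * r0 * cos \<theta>\<bar> \<le> \<rho> * (r0 * \<bar>sin \<theta>\<bar> + \<delta> * r0) * r0 * \<bar>cos \<theta>\<bar>"
    proof -
      have "\<bar>X\<bar> \<le> \<rho> * (r0 * \<bar>sin \<theta>\<bar> + \<delta> * r0)" using Xb wb \<rho>0 by (meson mult_left_mono order_trans)
      hence "\<bar>X\<bar> * (r0 * \<bar>cos \<theta>\<bar>) \<le> \<rho> * (r0 * \<bar>sin \<theta>\<bar> + \<delta> * r0) * (r0 * \<bar>cos \<theta>\<bar>)"
        using r00 by (intro mult_right_mono) auto
      thus ?thesis by (simp add: abs_mult r00 mult.assoc)
    qed
    also have "\<dots> = \<rho> * r0\<^sup>2 * \<bar>sin \<theta> * cos \<theta>\<bar> + \<rho> * \<delta> * r0\<^sup>2 * \<bar>cos \<theta>\<bar>"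
      by (simp add: power2_eq_square abs_mult algebra_simps)
    also have "\<dots> \<le> (\<rho> * r0\<^sup>2 / 2) * \<bar>sin (2*k*\<tau> + 2*\<psi>)\<bar> + \<rho> * \<delta> * r0\<^sup>2"
    proof -
      have sc: "\<bar>sin \<theta> * cos \<theta>\<bar> = \<bar>sin (2*k*\<tau> + 2*\<psi>)\<bar> / 2"
      proof -
        have "sin (2*k*\<tau> + 2*\<psi>) = sin (2*\<theta>)" by (simp add: \<theta>_def algebra_simps)
        thus ?thesis by (simp add: sin_double abs_mult)
      qed
      moreover have "\<rho> * \<delta> * r0\<^sup>2 * \<bar>cos \<theta>\<bar> \<le> \<rho> * \<delta> * r0\<^sup>2"
      proof -
        have "\<rho> * \<delta> * r0\<^sup>2 \<ge> 0" using \<rho>0 L by (simp add: \<delta>_def)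
        thus ?thesis using abs_cos_le_one[of \<theta>] by (simp add: mult_left_le)
      qed
      moreover have "\<rho> * r0\<^sup>2 * \<bar>sin \<theta> * cos \<theta>\<bar> = (\<rho> * r0\<^sup>2 / 2) * \<bar>sin (2*k*\<tau> + 2*\<psi>)\<bar>"
        unfolding sc by simp
      ultimately show ?thesis by linarith
    qed
    finally have "\<bar>X * r0 * cos \<theta>\<bar> \<le> (\<rho> * r0\<^sup>2 / 2) * \<bar>sin (2*k*\<tau> + 2*\<psi>)\<bar> + \<rho> * \<delta> * r0\<^sup>2" .
    thus "- (\<rho> * r0\<^sup>2 / 2) * \<bar>sin (2*k*\<tau> + 2*\<psi>)\<bar> - \<rho> * \<delta> * r0\<^sup>2 \<le> Re (cnj (v a) * F \<tau>)"
      unfolding eq by linarith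
  qed
  have "(cmod (v b))\<^sup>2 = (cmod (v a + D))\<^sup>2" by (simp add: D_def)
  also have "\<dots> = (cmod (v a))\<^sup>2 + 2 * Re (cnj (v a) * D) + (cmod D)\<^sup>2" by (rule norm_add_sq)
  finally have eqn: "(cmod (v b))\<^sup>2 = (cmod (v a))\<^sup>2 + 2 * Re (cnj (v a) * D) + (cmod D)\<^sup>2" .
  have "(cmod (v b))\<^sup>2 \<ge> r0\<^sup>2 + 2 * (- (\<rho> * r0\<^sup>2 / 2) * (2/k) - L * (\<rho> * \<delta> * r0\<^sup>2))"
  proof -
    have eqn': "(cmod (v b))\<^sup>2 = r0\<^sup>2 + 2 * Re (cnj (v a) * D) + (cmod D)\<^sup>2" using eqn by (simp add: r0_def)
    have aux: "(x::real) = a + 2*y + c \<Longrightarrow> l \<le> y \<Longrightarrow> 0 \<le> c \<Longrightarrow> a + 2*l \<le> x" for x a y c l by linarith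
    show ?thesis by (rule aux[OF eqn' ReDb zero_le_power2])
  qed
  moreover have "r0\<^sup>2 + 2 * (- (\<rho> * r0\<^sup>2 / 2) * (2/k) - L * (\<rho> * \<delta> * r0\<^sup>2))
      = r0\<^sup>2 * (1 - 2*\<rho>/k - 4*\<rho>\<^sup>2*L\<^sup>2)"
    by (simp add: \<delta>_def power2_eq_square algebra_simps)
  ultimately show "(cmod (v (a+pi/k)))\<^sup>2 \<ge> (cmod (v a))\<^sup>2 * (1 - 2*\<rho>/k - 4*\<rho>\<^sup>2*(pi/k)\<^sup>2)"
    by (simp add: b_def L_def r0_def)
qed

lemma loc_app:
  fixes v :: "real \<Rightarrow> complex" and V w :: "real \<Rightarrow> real" and k s t \<kappa> :: real
  assumes k: "k > 0" and st: "s \<le> t"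
  and Vi: "V absolutely_integrable_on {s..t}"
  and vc: "continuous_on {s..t} v"
  and wv: "\<And>\<tau>. w \<tau> = Im (v \<tau> * cis (k*\<tau>))"
  and vint: "\<And>r. s \<le> r \<Longrightarrow> r \<le> t \<Longrightarrow>
      ((\<lambda>\<tau>. of_real (V \<tau> * w \<tau> / k) * cis (-(k*\<tau>))) has_integral (v r - v s)) {s..r}"
  and qk: "integral {s..t} (\<lambda>\<tau>. \<bar>V \<tau>\<bar> / k) \<le> \<kappa>" and \<kappa>: "\<kappa> < 1"
  shows "\<And>r. r \<in> {s..t} \<Longrightarrow> cmod (v r - v s) \<le> \<kappa> * cmod (v s) / (1 - \<kappa>)"
proof -
  define q where "q \<tau> = \<bar>V \<tau>\<bar> / k" for \<tau>
  define F where "F \<tau> = of_real (V \<tau> * w \<tau> / k) * cis (-(k*\<tau>))" for \<tau>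
  have nw: "\<bar>w \<tau>\<bar> \<le> cmod (v \<tau>)" for \<tau>
    using abs_Im_le_cmod[of "v \<tau> * cis (k*\<tau>)"] by (simp add: wv norm_mult)
  have aVi: "(\<lambda>x. \<bar>V x\<bar>) absolutely_integrable_on {s..t}" using abs_int_abs[OF Vi] .
  have qi: "q integrable_on {s..t}"
  proof -
    have "((\<lambda>x. \<bar>V x\<bar>) has_integral integral {s..t} (\<lambda>x. \<bar>V x\<bar>)) {s..t}"
      by (intro integrable_integral) (use aVi in \<open>simp add: absolutely_integrable_on_def\<close>)
    from has_integral_divide[OF this, of k] show ?thesis unfolding q_def by blast
  qed
  have qvi: "(\<lambda>r. q r * cmod (v r)) integrable_on {s..t}"
  proof -
    have "(\<lambda>x. cmod (v x) / k * \<bar>V x\<bar>) absolutely_integrable_on {s..t}"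
      using k vc by (intro cont_abs_int aVi continuous_intros) auto
    hence "(\<lambda>x. cmod (v x) / k * \<bar>V x\<bar>) integrable_on {s..t}" by (simp add: absolutely_integrable_on_def)
    moreover have "(\<lambda>x. cmod (v x) / k * \<bar>V x\<bar>) = (\<lambda>r. q r * cmod (v r))" by (auto simp: q_def)
    ultimately show ?thesis by simp
  qed
  have q0: "\<And>r. r \<in> {s..t} \<Longrightarrow> 0 \<le> q r" using k by (simp add: q_def)
  have H: "cmod (v r - v s) \<le> integral {s..r} (\<lambda>\<tau>. q \<tau> * cmod (v \<tau>))" if r: "r \<in> {s..t}" for r
  proof -
    have Far: "(F has_integral (v r - v s)) {s..r}" using vint[of r] r unfolding F_def by auto
    have "cmod (v r - v s) = cmod (integral {s..r} F)" using Far by (simp add: integral_unique)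
    also have "\<dots> \<le> integral {s..r} (\<lambda>\<tau>. q \<tau> * cmod (v \<tau>))"
    proof (rule integral_norm_bound_integral)
      show "F integrable_on {s..r}" using Far by blast
      show "(\<lambda>\<tau>. q \<tau> * cmod (v \<tau>)) integrable_on {s..r}"
        using qvi r integrable_subinterval_real[of _ s t s r] by auto
      fix \<tau> assume "\<tau> \<in> {s..r}"
      have "cmod (F \<tau>) = \<bar>V \<tau> * w \<tau> / k\<bar>" unfolding F_def norm_mult norm_cis norm_of_real by simp
      also have "\<dots> = \<bar>V \<tau>\<bar> * \<bar>w \<tau>\<bar> / k" using k by (simp add: abs_mult)
      also have "\<dots> \<le> \<bar>V \<tau>\<bar> * cmod (v \<tau>) / k"
        using k nw by (intro divide_right_mono mult_left_mono) auto
      finally show "cmod (F \<tau>) \<le> q \<tau> * cmod (v \<tau>)" by (simp add: q_def)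
    qed
    finally show ?thesis .
  qed
  have qeq: "(\<lambda>\<tau>. \<bar>V \<tau>\<bar> / k) = q" by (rule ext) (simp add: q_def)
  have qk': "integral {s..t} q \<le> \<kappa>" using qk unfolding qeq .
  show "cmod (v r - v s) \<le> \<kappa> * cmod (v s) / (1 - \<kappa>)" if "r \<in> {s..t}" for r
    by (rule loc_bound(1)[OF st vc q0 qi qvi qk' \<kappa> H that])
qed

lemma nonvan:
  fixes v :: "real \<Rightarrow> complex" and V w :: "real \<Rightarrow> real" and k x0 T :: real
  assumes k: "k > 0"
  and Vi: "\<And>s t. x0 \<le> s \<Longrightarrow> s \<le> t \<Longrightarrow> V absolutely_integrable_on {s..t}"
  and vcont: "\<And>s t. x0 \<le> s \<Longrightarrow> continuous_on {s..t} v"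
  and wv: "\<And>\<tau>. w \<tau> = Im (v \<tau> * cis (k*\<tau>))"
  and vint: "\<And>s t. x0 \<le> s \<Longrightarrow> s \<le> t \<Longrightarrow>
      ((\<lambda>\<tau>. of_real (V \<tau> * w \<tau> / k) * cis (-(k*\<tau>))) has_integral (v t - v s)) {s..t}"
  and v0: "v x0 \<noteq> 0" and T: "x0 \<le> T"
  shows "v T \<noteq> 0"
proof -
  define q where "q \<tau> = \<bar>V \<tau>\<bar> / k" for \<tau>
  have qi: "q integrable_on {x0..T}"
  proof -
    have aVi: "(\<lambda>x. \<bar>V x\<bar>) absolutely_integrable_on {x0..T}" using abs_int_abs[OF Vi[OF order_refl T]] .
    have "((\<lambda>x. \<bar>V x\<bar>) has_integral integral {x0..T} (\<lambda>x. \<bar>V x\<bar>)) {x0..T}"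
      by (intro integrable_integral) (use aVi in \<open>simp add: absolutely_integrable_on_def\<close>)
    from has_integral_divide[OF this, of k] show ?thesis unfolding q_def by blast
  qed
  define \<Phi> where "\<Phi> x = integral {x0..x} q" for x
  have "continuous_on {x0..T} \<Phi>" unfolding \<Phi>_def by (rule indefinite_integral_continuous_1[OF qi])
  hence "uniformly_continuous_on {x0..T} \<Phi>" by (intro compact_uniformly_continuous) auto
  then obtain \<delta> where \<delta>: "\<delta> > 0" and \<delta>H: "\<And>x x'. x \<in> {x0..T} \<Longrightarrow> x' \<in> {x0..T} \<Longrightarrow> dist x' x < \<delta> \<Longrightarrow> dist (\<Phi> x') (\<Phi> x) < 1/3"
    unfolding uniformly_continuous_on_def by (metis zero_less_divide_1_iff zero_less_numeral)
  define h where "h = \<delta> / 2"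
  have h: "h > 0" "h < \<delta>" using \<delta> by (auto simp: h_def)
  have P: "\<forall>t. x0 \<le> t \<and> t \<le> T \<and> t \<le> x0 + real j * h \<longrightarrow> v t \<noteq> 0" for j
  proof (induction j)
    case 0
    then show ?case using v0 by auto
  next
    case (Suc j)
    show ?case
    proof (intro allI impI)
      fix t assume t: "x0 \<le> t \<and> t \<le> T \<and> t \<le> x0 + real (Suc j) * h"
      show "v t \<noteq> 0"
      proof (cases "t \<le> x0 + real j * h")
        case True thus ?thesis using Suc t by blast
      next
        case False
        define s where "s = x0 + real j * h"
        have s: "x0 \<le> s" "s < t" "s \<le> T" using False t h by (auto simp: s_def)
        have vs: "v s \<noteq> 0" using Suc s by (auto simp: s_def)
        have ts: "t - s \<le> h" using t by (simp add: s_def algebra_simps)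
        have "integral {x0..s} q + integral {s..t} q = integral {x0..t} q"
          using s t qi by (intro Henstock_Kurzweil_Integration.integral_combine integrable_subinterval_real[OF qi]) auto
        hence "integral {s..t} q = \<Phi> t - \<Phi> s" by (simp add: \<Phi>_def)
        moreover have "dist (\<Phi> t) (\<Phi> s) < 1/3" using \<delta>H[of s t] s t ts h by (auto simp: dist_real_def)
        ultimately have "integral {s..t} q \<le> 1/3" unfolding dist_real_def by linarith
        moreover have qeq: "(\<lambda>\<tau>. \<bar>V \<tau>\<bar> / k) = q" by (rule ext) (simp add: q_def)
        ultimately have qk: "integral {s..t} (\<lambda>\<tau>. \<bar>V \<tau>\<bar> / k) \<le> 1/3" by simp
        have "cmod (v t - v s) \<le> 1/3 * cmod (v s) / (1 - 1/3)"
          by (rule loc_app[OF k _ Vi[OF s(1)] vcont[OF s(1)] wv _ qk, of t])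
             (use s vint in auto)
        hence "cmod (v t - v s) \<le> cmod (v s) / 2" by simp
        moreover have "cmod (v s) > 0" using vs by simp
        ultimately show ?thesis by (auto simp: norm_minus_commute)
      qed
    qed
  qed
  obtain j :: nat where "(T - x0) / h < j" using reals_Archimedean2 by blast
  hence "T - x0 \<le> real j * h" using h by (simp add: field_simps)
  thus ?thesis using P[of j] T by auto
qed

lemma harm_contra:
  fixes E T :: real and M :: nat
  assumes E: "E > 0" and M: "M \<ge> 1" and B: "\<And>N. (\<Sum>n<N. E / real (M + n)) \<le> T"
  shows False
proof -
  have s: "summable (\<lambda>n. E / real (M + n))"
    by (rule summableI_nonneg_bounded[OF _ B]) (use E in auto)
  have "summable (\<lambda>n. (E / real M) * inverse (real (Suc n)))"
  proof (rule summable_comparison_test'[OF s])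
    fix n :: nat
    have Mp: "real M > 0" using M by simp
    have "real n * 1 \<le> real n * real M" using M by (intro mult_left_mono) auto
    hence "real (M + n) \<le> real M * real (Suc n)" by (simp add: algebra_simps)
    hence "E / (real M * real (Suc n)) \<le> E / real (M + n)"
      using E M by (intro divide_left_mono) auto
    thus "norm ((E / real M) * inverse (real (Suc n))) \<le> E / real (M + n)"
      using E Mp by (simp add: field_simps)
  qed
  hence "summable (\<lambda>n. inverse (real (Suc n)))" using E M by simp
  hence "summable (\<lambda>n. inverse (real n))"
    using summable_Suc_iff[where f = "\<lambda>n. inverse (real n)"] by simp
  thus False using not_summable_harmonic[where 'a = real] by simp
qed

lemma growth_alg:
  fixes m \<beta> C :: real
  assumes m1: "m \<ge> 1" and C0: "C \<ge> 0" and h: "(1 - \<beta>) * m \<ge> \<beta> + 2 * C"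
  shows "m / (m + 1) \<le> 1 - \<beta> / m - C / m\<^sup>2"
proof -
  have a: "(1 - \<beta>) * m * m \<ge> (\<beta> + 2 * C) * m" using h m1 by (intro mult_right_mono) auto
  have b: "C * m \<ge> C * 1" using C0 m1 by (intro mult_left_mono) auto
  have poly: "(1 - \<beta>) * (m * m) - (\<beta> + C) * m - C \<ge> 0" using a b by (simp add: algebra_simps)
  have mp: "m > 0" using m1 by simp
  define Y where "Y = 1 - \<beta> / m - C / m\<^sup>2"
  have Yeq: "Y * (m*m) = m*m - \<beta>*m - C" using mp by (simp add: Y_def field_simps power2_eq_square)
  have "Y * (m+1) * (m*m) = (Y * (m*m)) * (m+1)" by (simp add: mult_ac)
  also have "\<dots> = (m*m - \<beta>*m - C) * (m+1)" by (simp only: Yeq)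
  also have "\<dots> = m * (m*m) + ((1 - \<beta>) * (m * m) - (\<beta> + C) * m - C)" by (simp add: algebra_simps)
  finally have ineq: "m * (m*m) \<le> Y * (m+1) * (m*m)" using poly by linarith
  have mm: "0 < m * m" using mp by simp
  have "m \<le> Y * (m+1)" using ineq mm by (rule mult_right_le_imp_le)
  hence "m / (m+1) \<le> Y" using mp by (simp add: pos_divide_le_eq)
  thus ?thesis by (simp add: Y_def)
qed

lemma core:
  fixes V w w' :: "real \<Rightarrow> real" and k c X0 x0 T :: real
  assumes k: "k > 0" and c: "c > 0" and ck: "2*c < pi*k"
  and X0: "X0 > 0" and Vb: "\<And>t. t \<ge> X0 \<Longrightarrow> \<bar>V t\<bar> \<le> c / t"
  and Vi: "\<And>s t. x0 \<le> s \<Longrightarrow> s \<le> t \<Longrightarrow> V absolutely_integrable_on {s..t}"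
  and wd: "\<And>x. x0 \<le> x \<Longrightarrow> (w has_real_derivative w' x) (at x within {x0..})"
  and w'i: "\<And>y x. x0 \<le> y \<Longrightarrow> y \<le> x \<Longrightarrow> ((\<lambda>t. (V t - k\<^sup>2) * w t) has_integral (w' x - w' y)) {y..x}"
  and wne: "w x0 \<noteq> 0"
  and L2: "\<And>N. x0 \<le> N \<Longrightarrow> integral {x0..N} (\<lambda>t. (w t)\<^sup>2) \<le> T"
  shows False
proof -
  define v where "v t = Complex (w' t / k) (w t) * cis (-(k*t))" for t
  note VOP = vop[OF k Vi wd w'i v_def]
  have vint: "\<And>s t. x0 \<le> s \<Longrightarrow> s \<le> t \<Longrightarrow>
      ((\<lambda>\<tau>. of_real (V \<tau> * w \<tau> / k) * cis (-(k*\<tau>))) has_integral (v t - v s)) {s..t}"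
    by (rule VOP(1))
  have vcont: "\<And>s t. x0 \<le> s \<Longrightarrow> continuous_on {s..t} v" by (rule VOP(2))
  have wcont: "\<And>s t. x0 \<le> s \<Longrightarrow> continuous_on {s..t} w" by (rule VOP(3))
  have wv: "\<And>t. w t = Im (v t * cis (k*t))" by (rule VOP(4))
  have v0: "v x0 \<noteq> 0" using wne wv[of x0] by auto
  define \<beta> where "\<beta> = 2*c/(pi*k)"
  have \<beta>1: "\<beta> < 1" using ck k by (simp add: \<beta>_def field_simps)
  define C where "C = 4*c\<^sup>2/k\<^sup>2"
  have C0: "C \<ge> 0" by (simp add: C_def)
  define tt where "tt m = real m * pi / k" for m :: nat
  have tt_Suc: "tt m + pi/k = tt (Suc m)" for m using k by (simp add: tt_def field_simps)
  have tt_mono: "tt a \<le> tt b" if "a \<le> b" for a b using that k by (simp add: tt_def divide_right_mono)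
  define B where "B = max (max (max (X0*k/pi) (x0*k/pi)) (16*c/k)) ((\<beta> + 2*C)/(1-\<beta>))"
  obtain n0 :: nat where n0: "B < real n0" using reals_Archimedean2 by blast
  define M where "M = Suc n0"
  have M1: "M \<ge> 1" by (simp add: M_def)
  have MB: "B < real M" using n0 by (simp add: M_def)
  have conds: "X0 \<le> tt m \<and> x0 \<le> tt m \<and> 16*c/k \<le> real m \<and> (1-\<beta>) * real m \<ge> \<beta> + 2*C" if m: "m \<ge> M" for m
  proof -
    have Bm: "B < real m" using MB m by linarith
    have "X0*k/pi < real m" using Bm by (simp add: B_def)
    hence "X0 < tt m" using k pi_gt_zero by (simp add: tt_def field_simps)
    moreover have "x0*k/pi < real m" using Bm by (simp add: B_def)
    hence "x0 < tt m" using k pi_gt_zero by (simp add: tt_def field_simps)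
    moreover have "16*c/k \<le> real m" using Bm by (simp add: B_def)
    moreover have "(\<beta> + 2*C)/(1-\<beta>) < real m" using Bm by (simp add: B_def)
    hence "\<beta> + 2*C \<le> (1-\<beta>) * real m" using \<beta>1 by (simp add: field_simps)
    ultimately show ?thesis by auto
  qed
  have stepm: "real m * (cmod (v (tt m)))\<^sup>2 \<le> real (Suc m) * (cmod (v (tt (Suc m))))\<^sup>2 \<and>
      integral {tt m..tt (Suc m)} (\<lambda>\<tau>. (w \<tau>)\<^sup>2) \<ge> (cmod (v (tt m)))\<^sup>2 * (pi/(4*k))"
    if m: "m \<ge> M" for m
  proof -
    note cm = conds[OF m]
    have mpos: "real m \<ge> 1" using m M1 by linarith
    have ttpos: "tt m > 0" using cm X0 by linarith
    define \<rho> where "\<rho> = c / (real m * pi)"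
    have \<rho>0: "\<rho> \<ge> 0" using c mpos by (simp add: \<rho>_def)
    have ttk: "tt m * k = real m * pi" using k by (simp add: tt_def)
    have Vb': "\<bar>V \<tau>\<bar> / k \<le> \<rho>" if t: "\<tau> \<in> {tt m..tt m + pi/k}" for \<tau>
    proof -
      have "\<bar>V \<tau>\<bar> \<le> c / \<tau>" using Vb[of \<tau>] t cm by auto
      also have "\<dots> \<le> c / tt m" using t ttpos c by (intro divide_left_mono) auto
      finally have "\<bar>V \<tau>\<bar> / k \<le> c / tt m / k" using k by (intro divide_right_mono) auto
      also have "\<dots> = \<rho>" using ttk by (simp add: \<rho>_def)
      finally show ?thesis .
    qed
    have x0m: "x0 \<le> tt m" using cm by simp
    have small: "\<rho> * (pi/k) \<le> 1/4"
    proof -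
      have "\<rho> * (pi/k) = c / (real m * k)" using pi_gt_zero by (simp add: \<rho>_def field_simps)
      also have "\<dots> \<le> 1/4" using cm k c mpos by (simp add: field_simps)
      finally show ?thesis .
    qed
    have ST: "(cmod (v (tt m + pi/k)))\<^sup>2 \<ge> (cmod (v (tt m)))\<^sup>2 * (1 - 2*\<rho>/k - 4*\<rho>\<^sup>2*(pi/k)\<^sup>2)"
         "integral {tt m..tt m+pi/k} (\<lambda>\<tau>. (w \<tau>)\<^sup>2) \<ge> (cmod (v (tt m)))\<^sup>2 * (pi/(2*k) - 4*\<rho>*(pi/k)\<^sup>2)"
    proof -
      have vint': "\<And>s t. tt m \<le> s \<Longrightarrow> s \<le> t \<Longrightarrow> t \<le> tt m + pi/k \<Longrightarrow>
          ((\<lambda>\<tau>. of_real (V \<tau> * w \<tau> / k) * cis (-(k*\<tau>))) has_integral (v t - v s)) {s..t}"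
        using vint x0m by auto
      have ttL: "tt m \<le> tt m + pi/k" using k by simp
      show "(cmod (v (tt m + pi/k)))\<^sup>2 \<ge> (cmod (v (tt m)))\<^sup>2 * (1 - 2*\<rho>/k - 4*\<rho>\<^sup>2*(pi/k)\<^sup>2)"
        by (rule step(1)[OF k \<rho>0 Vb' Vi[OF x0m ttL] vcont[OF x0m] wcont[OF x0m] wv vint' small])
      show "integral {tt m..tt m+pi/k} (\<lambda>\<tau>. (w \<tau>)\<^sup>2) \<ge> (cmod (v (tt m)))\<^sup>2 * (pi/(2*k) - 4*\<rho>*(pi/k)\<^sup>2)"
        by (rule step(2)[OF k \<rho>0 Vb' Vi[OF x0m ttL] vcont[OF x0m] wcont[OF x0m] wv vint' small])
    qed
    have f1: "1 - 2*\<rho>/k - 4*\<rho>\<^sup>2*(pi/k)\<^sup>2 = 1 - \<beta> / real m - C / (real m)\<^sup>2"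
      using k pi_gt_zero mpos by (simp add: \<rho>_def \<beta>_def C_def field_simps power2_eq_square)
    have g: "real m / (real m + 1) \<le> 1 - \<beta> / real m - C / (real m)\<^sup>2"
      by (rule growth_alg[OF mpos C0]) (use cm in auto)
    have A: "real m * (cmod (v (tt m)))\<^sup>2 \<le> real (Suc m) * (cmod (v (tt (Suc m))))\<^sup>2"
    proof -
      have "real m * (cmod (v (tt m)))\<^sup>2 = (real m + 1) * ((cmod (v (tt m)))\<^sup>2 * (real m / (real m + 1)))"
        by (simp add: field_simps)
      also have "\<dots> \<le> (real m + 1) * ((cmod (v (tt m)))\<^sup>2 * (1 - 2*\<rho>/k - 4*\<rho>\<^sup>2*(pi/k)\<^sup>2))"
        unfolding f1 by (intro mult_left_mono g) auto
      also have "\<dots> \<le> (real m + 1) * (cmod (v (tt (Suc m))))\<^sup>2"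
        using ST(1) by (intro mult_left_mono) (auto simp: tt_Suc)
      finally show ?thesis by (simp add: add.commute)
    qed
    have f2: "pi/(4*k) \<le> pi/(2*k) - 4*\<rho>*(pi/k)\<^sup>2"
    proof -
      have e: "4*\<rho>*(pi/k)\<^sup>2 = (pi/(4*k)) * (16*c / (real m * k))"
        using k pi_gt_zero mpos by (simp add: \<rho>_def field_simps power2_eq_square)
      have "16*c / (real m * k) \<le> 1" using cm k mpos by (simp add: field_simps)
      hence "(pi/(4*k)) * (16*c / (real m * k)) \<le> pi/(4*k)" using k pi_gt_zero
        by (intro mult_left_le) auto
      thus ?thesis unfolding e by (simp add: field_simps)
    qed
    have Bq: "integral {tt m..tt (Suc m)} (\<lambda>\<tau>. (w \<tau>)\<^sup>2) \<ge> (cmod (v (tt m)))\<^sup>2 * (pi/(4*k))"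
    proof -
      have "(cmod (v (tt m)))\<^sup>2 * (pi/(4*k)) \<le> (cmod (v (tt m)))\<^sup>2 * (pi/(2*k) - 4*\<rho>*(pi/k)\<^sup>2)"
        by (intro mult_left_mono f2) auto
      thus ?thesis using ST(2) by (simp add: tt_Suc)
    qed
    show ?thesis using A Bq by simp
  qed
  define K0 where "K0 = real M * (cmod (v (tt M)))\<^sup>2"
  have vM: "v (tt M) \<noteq> 0"
    by (rule nonvan[OF k Vi vcont wv vint v0]) (use conds[of M] in auto)
  have K0: "K0 > 0" using vM M1 by (simp add: K0_def)
  have grow: "K0 \<le> real (M + n) * (cmod (v (tt (M + n))))\<^sup>2" for n
  proof (induction n)
    case 0 thus ?case by (simp add: K0_def)
  next
    case (Suc n)
    have "real (M + n) * (cmod (v (tt (M + n))))\<^sup>2 \<le> real (Suc (M + n)) * (cmod (v (tt (Suc (M + n)))))\<^sup>2"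
      using stepm[of "M + n"] by auto
    thus ?case using Suc by simp
  qed
  define W where "W t = (w t)\<^sup>2" for t
  have Weq: "W = (\<lambda>t. (w t)\<^sup>2)" by (rule ext) (simp add: W_def)
  have Wi: "W integrable_on {a..b}" if "x0 \<le> a" for a b
    unfolding W_def by (intro integrable_continuous_real continuous_intros wcont that)
  have x0M: "x0 \<le> tt M" using conds[of M] by auto
  have sumI: "(\<Sum>n<N. integral {tt (M+n)..tt (M + Suc n)} W) = integral {tt M..tt (M+N)} W" for N
  proof (induction N)
    case 0 thus ?case by simp
  next
    case (Suc N)
    have "integral {tt M..tt (M+N)} W + integral {tt (M+N)..tt (M + Suc N)} W = integral {tt M..tt (M + Suc N)} W"
      by (intro Henstock_Kurzweil_Integration.integral_combine tt_mono Wi x0M) auto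
    thus ?case using Suc by simp
  qed
  have sumB: "integral {tt M..tt (M+N)} W \<le> T" for N
  proof -
    have "integral {x0..tt M} W + integral {tt M..tt (M+N)} W = integral {x0..tt (M+N)} W"
      by (intro Henstock_Kurzweil_Integration.integral_combine tt_mono Wi x0M) auto
    moreover have "integral {x0..tt M} W \<ge> 0" by (intro integral_nonneg Wi) (auto simp: W_def)
    moreover have "integral {x0..tt (M+N)} W \<le> T"
      using L2[of "tt (M+N)"] x0M tt_mono[of M "M+N"] unfolding Weq by simp
    ultimately show ?thesis by linarith
  qed
  define E where "E = pi/(4*k) * K0"
  have E: "E > 0" using K0 k by (simp add: E_def)
  show False
  proof (rule harm_contra[OF E M1])
    fix N
    have "(\<Sum>n<N. E / real (M + n)) \<le> (\<Sum>n<N. integral {tt (M+n)..tt (M + Suc n)} W)"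
    proof (rule sum_mono)
      fix n assume "n \<in> {..<N}"
      have Mn: "real (M + n) > 0" using M1 by simp
      have "K0 / real (M + n) \<le> (cmod (v (tt (M + n))))\<^sup>2"
        using grow[of n] Mn by (simp add: field_simps)
      hence kv: "K0 / real (M + n) \<le> (cmod (v (tt (M + n))))\<^sup>2" .
      have "E / real (M + n) = (pi/(4*k)) * (K0 / real (M + n))" by (simp add: E_def)
      also have "\<dots> \<le> (pi/(4*k)) * (cmod (v (tt (M + n))))\<^sup>2"
        by (rule mult_left_mono[OF kv]) (use k in simp)
      also have "\<dots> = (cmod (v (tt (M + n))))\<^sup>2 * (pi/(4*k))" by (simp add: mult.commute)
      also have "\<dots> \<le> integral {tt (M+n)..tt (M + Suc n)} W"
        using stepm[of "M+n"] unfolding Weq by simp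
      finally show "E / real (M + n) \<le> integral {tt (M+n)..tt (M + Suc n)} W" .
    qed
    also have "\<dots> \<le> T" using sumI sumB by simp
    finally show "(\<Sum>n<N. E / real (M + n)) \<le> T" .
  qed
qed

lemma comp_sol:
  fixes V :: "real \<Rightarrow> real" and u u' :: "real \<Rightarrow> complex" and p :: "complex \<Rightarrow> real"
    and k c X0 x0 :: real and I :: "real set"
  assumes p: "bounded_linear p" and pmul: "\<And>r z. p (of_real r * z) = r * p z"
  and psq: "\<And>z. (p z)\<^sup>2 \<le> (cmod z)\<^sup>2"
  and k: "k > 0" and c: "c > 0" and ck: "2*c < pi*k"
  and X0: "X0 > 0" and Vb: "\<And>t. t \<ge> X0 \<Longrightarrow> \<bar>V t\<bar> \<le> c / t"
  and LI: "\<And>s t. x0 \<le> s \<Longrightarrow> s \<le> t \<Longrightarrow> set_integrable lborel {s..t} V"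
  and I: "{x0..} \<subseteq> I"
  and ud: "\<And>x. x \<in> I \<Longrightarrow> (u has_vector_derivative u' x) (at x within I)"
  and ui: "\<And>x y. x \<in> I \<Longrightarrow> y \<in> I \<Longrightarrow> y \<le> x \<Longrightarrow>
      ((\<lambda>t. complex_of_real (V t - k\<^sup>2) * u t) has_integral (u' x - u' y)) {y..x}"
  and L2: "set_integrable lborel I (\<lambda>x. (cmod (u x))\<^sup>2)"
  and ne: "p (u x0) \<noteq> 0"
  shows False
proof (rule core[OF k c ck X0 Vb, of x0 "\<lambda>t. p (u t)" "\<lambda>t. p (u' t)" "integral I (\<lambda>x. (cmod (u x))\<^sup>2)"])
  show "V absolutely_integrable_on {s..t}" if "x0 \<le> s" "s \<le> t" for s t
  proof -
    have "V integrable_on {s..t}" using set_borel_integral_eq_integral(1)[OF LI[OF that]] .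
    moreover have "(\<lambda>x. norm (V x)) integrable_on {s..t}"
      using set_borel_integral_eq_integral(1)[OF set_integrable_norm[OF LI[OF that]]] .
    ultimately show ?thesis by (simp add: absolutely_integrable_on_def)
  qed
  have ud': "(u has_vector_derivative u' x) (at x within {x0..})" if "x0 \<le> x" for x
    using has_vector_derivative_within_subset[OF ud I] that I by auto
  show "((\<lambda>t. p (u t)) has_real_derivative p (u' x)) (at x within {x0..})" if "x0 \<le> x" for x
    using bounded_linear.has_vector_derivative[OF p ud'[OF that]]
    by (simp add: has_real_derivative_iff_has_vector_derivative)
  show "((\<lambda>t. (V t - k\<^sup>2) * p (u t)) has_integral (p (u' x) - p (u' y))) {y..x}"
    if "x0 \<le> y" "y \<le> x" for y x
  proof -
    have "((p \<circ> (\<lambda>t. complex_of_real (V t - k\<^sup>2) * u t)) has_integral p (u' x - u' y)) {y..x}"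
      by (rule has_integral_linear[OF ui p]) (use that I in auto)
    moreover have "p (u' x - u' y) = p (u' x) - p (u' y)" using p by (simp add: linear_simps)
    moreover have "(p \<circ> (\<lambda>t. complex_of_real (V t - k\<^sup>2) * u t)) = (\<lambda>t. (V t - k\<^sup>2) * p (u t))"
      by (rule ext) (simp only: o_def pmul)
    ultimately show ?thesis by simp
  qed
  show "p (u x0) \<noteq> 0" by (rule ne)
  show "integral {x0..N} (\<lambda>t. (p (u t))\<^sup>2) \<le> integral I (\<lambda>x. (cmod (u x))\<^sup>2)" if N: "x0 \<le> N" for N
  proof -
    have uc: "continuous_on {x0..N} u"
    proof (rule continuous_on_vector_derivative)
      fix x assume "x \<in> {x0..N}"
      thus "(u has_vector_derivative u' x) (at x within {x0..N})"
        using has_vector_derivative_within_subset[OF ud'[of x]] by auto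
    qed
    have i1: "(\<lambda>t. (p (u t))\<^sup>2) integrable_on {x0..N}"
      using bounded_linear.continuous_on[OF p uc] by (intro integrable_continuous_real continuous_intros)
    have i2: "(\<lambda>t. (cmod (u t))\<^sup>2) integrable_on {x0..N}"
      using uc by (intro integrable_continuous_real continuous_intros)
    have "integral {x0..N} (\<lambda>t. (p (u t))\<^sup>2) \<le> integral {x0..N} (\<lambda>t. (cmod (u t))\<^sup>2)"
      by (rule integral_le[OF i1 i2]) (rule psq)
    also have "\<dots> \<le> integral I (\<lambda>x. (cmod (u x))\<^sup>2)"
      by (rule integral_subset_le[OF _ i2 set_borel_integral_eq_integral(1)[OF L2]]) (use I in auto)
    finally show ?thesis .
  qed
qed

lemma main_gen:
  fixes V :: "real \<Rightarrow> real" and a lam x0 :: real and I :: "real set" and u u' :: "real \<Rightarrow> complex"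
  assumes lim: "Limsup at_top (\<lambda>x. ereal \<bar>x * V x\<bar>) = ereal a"
  and LI: "\<And>s t. x0 \<le> s \<Longrightarrow> s \<le> t \<Longrightarrow> set_integrable lborel {s..t} V"
  and I: "{x0..} \<subseteq> I"
  and sol: "sl_solution V lam I u u'"
  and L2: "square_integrable_on I u"
  and ne: "u x0 \<noteq> 0"
  shows "lam \<le> 4 * a\<^sup>2 / pi\<^sup>2"
proof (rule ccontr)
  assume "\<not> lam \<le> 4 * a\<^sup>2 / pi\<^sup>2"
  hence lamgt: "lam > 4 * a\<^sup>2 / pi\<^sup>2" by simp
  have a2: "4 * a\<^sup>2 / pi\<^sup>2 = (2 * a / pi)\<^sup>2" by (simp add: power_divide power_mult_distrib)
  have lam0: "lam > 0" using lamgt a2 by (smt (verit) zero_le_power2)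
  define k where "k = sqrt lam"
  have k: "k > 0" using lam0 by (simp add: k_def)
  have k2: "k\<^sup>2 = lam" using lam0 by (simp add: k_def)
  have kgt: "2 * \<bar>a\<bar> / pi < k"
  proof -
    have "sqrt ((2 * a / pi)\<^sup>2) < sqrt lam" using lamgt a2 by (intro real_sqrt_less_mono) simp
    thus ?thesis by (simp add: k_def abs_mult)
  qed
  define c where "c = (max a 0 + k * pi / 2) / 2"
  have kpi: "k * pi / 2 > \<bar>a\<bar>" using kgt pi_gt_zero by (simp add: field_simps)
  have c0: "c > 0" using k pi_gt_zero by (simp add: c_def add_nonneg_pos)
  have ac: "a < c" using kpi by (simp add: c_def)
  have ck: "2*c < pi*k" using kpi by (simp add: c_def algebra_simps)
  have "eventually (\<lambda>x. ereal \<bar>x * V x\<bar> < ereal c) at_top"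
    by (rule Limsup_lessD) (use lim ac in simp)
  then obtain X where X: "\<And>x. x \<ge> X \<Longrightarrow> \<bar>x * V x\<bar> < c"
    unfolding eventually_at_top_linorder by auto
  define X0 where "X0 = max X 1"
  have X0: "X0 > 0" by (simp add: X0_def)
  have Vb: "\<bar>V t\<bar> \<le> c / t" if t: "t \<ge> X0" for t
  proof -
    have tp: "t > 0" using t X0 by linarith
    have "t * \<bar>V t\<bar> < c" using X[of t] t tp by (simp add: X0_def abs_mult)
    thus ?thesis using tp by (simp add: field_simps)
  qed
  have ud: "\<And>x. x \<in> I \<Longrightarrow> (u has_vector_derivative u' x) (at x within I)"
    using sol by (simp add: sl_solution_def)
  have ui: "\<And>x y. x \<in> I \<Longrightarrow> y \<in> I \<Longrightarrow> y \<le> x \<Longrightarrow>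
      ((\<lambda>t. complex_of_real (V t - k\<^sup>2) * u t) has_integral (u' x - u' y)) {y..x}"
    using sol by (simp add: sl_solution_def k2)
  have L2': "set_integrable lborel I (\<lambda>x. (cmod (u x))\<^sup>2)" using L2 by (simp add: square_integrable_on_def)
  show False
  proof (cases "Re (u x0) = 0")
    case False
    show False
      by (rule comp_sol[OF bounded_linear_Re _ _ k c0 ck X0 Vb LI I ud ui L2' False])
         (auto simp: cmod_power2)
  next
    case True
    hence imne: "Im (u x0) \<noteq> 0" using ne complex_eq_iff by auto
    show False
      by (rule comp_sol[OF bounded_linear_Im _ _ k c0 ck X0 Vb LI I ud ui L2' imne])
         (auto simp: cmod_power2)
  qed
qed

theorem theorem1p1:
  fixes V :: "real \<Rightarrow> real" and a :: real
  assumes "Limsup at_top (\<lambda>x. ereal \<bar>x * V x\<bar>) = ereal a"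
  shows "(locally_integrable_pot {0..} V \<longrightarrow>
           (\<forall>\<alpha> lam. halfline_eigenvalue V \<alpha> lam \<longrightarrow> lam \<le> 4 * a\<^sup>2 / pi\<^sup>2)) \<and>
         (locally_integrable_pot UNIV V \<longrightarrow>
           (\<forall>lam. line_eigenvalue V lam \<longrightarrow> lam \<le> 4 * a\<^sup>2 / pi\<^sup>2))"
proof (intro conjI impI allI)
  fix \<alpha> lam
  assume LI: "locally_integrable_pot {0..} V" and ev: "halfline_eigenvalue V \<alpha> lam"
  then obtain u u' x1 where sol: "sl_solution V lam {0..} u u'" and L2: "square_integrable_on {0..} u"
    and x1: "x1 \<ge> 0" "u x1 \<noteq> 0"
    unfolding halfline_eigenvalue_def by blast
  show "lam \<le> 4 * a\<^sup>2 / pi\<^sup>2"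
  proof (rule main_gen[OF assms _ _ sol L2 x1(2)])
    show "set_integrable lborel {s..t} V" if "x1 \<le> s" "s \<le> t" for s t
      using LI x1 that unfolding locally_integrable_pot_def by auto
    show "{x1..} \<subseteq> {0..}" using x1 by auto
  qed
next
  fix lam
  assume LI: "locally_integrable_pot UNIV V" and ev: "line_eigenvalue V lam"
  then obtain u u' x1 where sol: "sl_solution V lam UNIV u u'" and L2: "square_integrable_on UNIV u"
    and x1: "u x1 \<noteq> 0"
    unfolding line_eigenvalue_def by blast
  show "lam \<le> 4 * a\<^sup>2 / pi\<^sup>2"
  proof (rule main_gen[OF assms _ _ sol L2 x1])
    show "set_integrable lborel {s..t} V" if "x1 \<le> s" "s \<le> t" for s t
      using LI that unfolding locally_integrable_pot_def by auto
  qed auto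
qed

end
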